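(* Let $M$ be a path-circular matroid and let $e\in E(M)$. Then $M\backslash e$ and $M/e$ are both path-circular matroids.
   Context: Let $G$ be a simple graph. A path of $G$ is written as the ordered list of its (distinct) vertices $u_1,\ldots,u_k$, consecutive ones adjacent; paths with zero vertices ("null paths") and one vertex are allowed. A path-circular collection $\mathcal P$ of $G$ is a collection of (not necessarily distinct) paths of $G$ such that whenever $u_1,\ldots,u_k$ are the vertices in order of a path in $\mathcal P$ and $i\in\{2,\ldots,k-1\}$: (i) $u_i$ has degree $2$ in $G$, and (ii) every path of $\mathcal P$ containing $u_i$ also contains at least one of $u_1,u_k$. If $V(G)=\{v_1,\ldots,v_r\}$, let $N(v_i)=\{p\in\mathcal P: v_i \text{ is a vertex of } p\}$ and let $M(\mathcal P)$ be the transversal matroid on ground set $\mathcal P$ (members of the collection being distinct elements) with presentation $(N(v_1),\ldots,N(v_r))$, i.e. whose independent sets are the sets $\{x_1,\ldots,x_m\}$ of distinct elements for which there are distinct $k_1,\ldots,k_m\in[r]$ with $x_i\in N(v_{k_i})$. A matroid of the form $M(\mathcal P)$ (up to isomorphism) is a path-circular matroid. *)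

theory Defs
  imports Main
begin

type_synonym 'a matroid = "'a set \<times> ('a set \<Rightarrow> bool)"

definition ground :: "'a matroid \<Rightarrow> 'a set" where
  "ground M = fst M"

definition indep :: "'a matroid \<Rightarrow> 'a set \<Rightarrow> bool" where
  "indep M = snd M"

definition mdelete :: "'a matroid \<Rightarrow> 'a \<Rightarrow> 'a matroid" where
  "mdelete M e = (ground M - {e}, \<lambda>X. X \<subseteq> ground M - {e} \<and> indep M X)"

definition mcontract :: "'a matroid \<Rightarrow> 'a \<Rightarrow> 'a matroid" where
  "mcontract M e = (ground M - {e}, \<lambda>X. X \<subseteq> ground M - {e} \<and>
      (if indep M {e} then indep M (insert e X) else indep M X))"

definition matroid_iso :: "'a matroid \<Rightarrow> 'b matroid \<Rightarrow> bool" where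
  "matroid_iso M N = (\<exists>f. bij_betw f (ground M) (ground N) \<and>
      (\<forall>X. indep M X \<longleftrightarrow> X \<subseteq> ground M \<and> indep N (f ` X)))"

definition simple_graph :: "'v set \<Rightarrow> ('v \<Rightarrow> 'v \<Rightarrow> bool) \<Rightarrow> bool" where
  "simple_graph V Adj = (finite V \<and>
      (\<forall>u w. Adj u w \<longrightarrow> u \<in> V \<and> w \<in> V \<and> u \<noteq> w \<and> Adj w u))"

definition degree :: "'v set \<Rightarrow> ('v \<Rightarrow> 'v \<Rightarrow> bool) \<Rightarrow> 'v \<Rightarrow> nat" where
  "degree V Adj u = card {w \<in> V. Adj u w}"

definition is_path :: "'v set \<Rightarrow> ('v \<Rightarrow> 'v \<Rightarrow> bool) \<Rightarrow> 'v list \<Rightarrow> bool" where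
  "is_path V Adj p = (distinct p \<and> set p \<subseteq> V \<and>
      (\<forall>i. Suc i < length p \<longrightarrow> Adj (p ! i) (p ! Suc i)))"

text \<open>A collection of paths, indexed by the finite set P (members are distinct elements),
  the member with index x being the path pth x.\<close>
definition path_circular_collection ::
  "'v set \<Rightarrow> ('v \<Rightarrow> 'v \<Rightarrow> bool) \<Rightarrow> 'i set \<Rightarrow> ('i \<Rightarrow> 'v list) \<Rightarrow> bool" where
  "path_circular_collection V Adj P pth = (finite P \<and>
      (\<forall>x\<in>P. is_path V Adj (pth x)) \<and>
      (\<forall>x\<in>P. \<forall>i. 0 < i \<and> Suc i < length (pth x) \<longrightarrow>
          degree V Adj (pth x ! i) = 2 \<and>
          (\<forall>y\<in>P. pth x ! i \<in> set (pth y) \<longrightarrow>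
              hd (pth x) \<in> set (pth y) \<or> last (pth x) \<in> set (pth y))))"

text \<open>The transversal matroid with presentation (N(v)) for v in V, N(v) = {p | v on p}.\<close>
definition path_transversal :: "'v set \<Rightarrow> 'i set \<Rightarrow> ('i \<Rightarrow> 'v list) \<Rightarrow> 'i matroid" where
  "path_transversal V P pth = (P, \<lambda>X. X \<subseteq> P \<and>
      (\<exists>f. inj_on f X \<and> (\<forall>x\<in>X. f x \<in> V \<and> f x \<in> set (pth x))))"

text \<open>Path-circular matroid: isomorphic to some M(P); vertices and collection indices
  are taken in nat without loss of generality (all finite).\<close>
definition path_circular :: "'a matroid \<Rightarrow> bool" where
  "path_circular M = (\<exists>(V::nat set) Adj (P::nat set) pth.
      simple_graph V Adj \<and> path_circular_collection V Adj P pth \<and>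
      matroid_iso M (path_transversal V P pth))"

end

theory Submission
  imports Defs
begin



fun lnb :: "'v list \<Rightarrow> 'v \<Rightarrow> 'v \<Rightarrow> bool" where
  "lnb (x # y # zs) v w = ((x = v \<and> y = w) \<or> (x = w \<and> y = v) \<or> lnb (y # zs) v w)"
| "lnb _ v w = False"

lemma lnb_sym: "lnb p v w = lnb p w v"
  by (induction p v w rule: lnb.induct) auto

lemma lnb_set: "lnb p v w \<Longrightarrow> v \<in> set p \<and> w \<in> set p"
  by (induction p v w rule: lnb.induct) auto

lemma lnb_Cons: "lnb (x # ys) v w \<longleftrightarrow> lnb ys v w \<or> (ys \<noteq> [] \<and> ((x = v \<and> hd ys = w) \<or> (x = w \<and> hd ys = v)))"
  by (cases ys) auto

lemma lnb_append: "lnb (xs @ ys) v w \<longleftrightarrow> lnb xs v w \<or> lnb ys v w \<or>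
   (xs \<noteq> [] \<and> ys \<noteq> [] \<and> ((last xs = v \<and> hd ys = w) \<or> (last xs = w \<and> hd ys = v)))"
proof (induction xs)
  case Nil then show ?case by simp
next
  case (Cons x xs)
  show ?case
  proof (cases xs)
    case Nil then show ?thesis by (simp add: lnb_Cons)
  next
    case (Cons x' xs')
    then show ?thesis using Cons.IH by (auto simp: lnb_Cons)
  qed
qed

lemma ex_nat_split: "(\<exists>i::nat. Q i) = (Q 0 \<or> (\<exists>j. Q (Suc j)))"
  by (metis not0_implies_Suc)

lemma lnb_nth: "lnb p v w \<longleftrightarrow> (\<exists>i. Suc i < length p \<and> ((p!i = v \<and> p!Suc i = w) \<or> (p!i = w \<and> p!Suc i = v)))"
proof (induction p v w rule: lnb.induct)
  case (1 x y zs v w)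
  show ?case
    apply (subst ex_nat_split)
    using 1 by auto
qed (auto simp: less_Suc_eq)

lemma lnb_map: "lnb (map f p) v w \<longleftrightarrow> (\<exists>v0 w0. lnb p v0 w0 \<and> f v0 = v \<and> f w0 = w)"
proof (induction p)
  case Nil then show ?case by simp
next
  case (Cons x xs)
  then show ?case by (cases xs) (auto simp: lnb_Cons)
qed

lemma chain_lnb:
  assumes "\<And>x y. R x y \<Longrightarrow> R y x"
  shows "(\<forall>i. Suc i < length p \<longrightarrow> R (p!i) (p!Suc i)) \<longleftrightarrow> (\<forall>v w. lnb p v w \<longrightarrow> R v w)"
  using assms unfolding lnb_nth by metis

lemma lnb_nth_cases:
  assumes "distinct p" "k < length p" "lnb p (p!k) x"
  shows "(0 < k \<and> x = p!(k-1)) \<or> (Suc k < length p \<and> x = p!Suc k)"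
proof -
  obtain i where i: "Suc i < length p" "(p!i = p!k \<and> p!Suc i = x) \<or> (p!i = x \<and> p!Suc i = p!k)"
    using assms(3) unfolding lnb_nth by blast
  show ?thesis
  proof (cases "p!i = p!k \<and> p!Suc i = x")
    case True
    then have "i = k" using assms i nth_eq_iff_index_eq by fastforce
    then show ?thesis using True i by auto
  next
    case False
    then have "p!Suc i = p!k" "p!i = x" using i by auto
    then have "Suc i = k" using assms i nth_eq_iff_index_eq by metis
    then show ?thesis using \<open>p!i = x\<close> by auto
  qed
qed

definition intr :: "'v list \<Rightarrow> 'v set" where
  "intr p = {v. \<exists>x y. x \<noteq> y \<and> lnb p v x \<and> lnb p v y}"

lemma intr_set: "intr p \<subseteq> set p"
  unfolding intr_def using lnb_set by fastforce

lemma lnb_pos: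
  assumes "distinct p" "0 < k" "Suc k < length p"
  shows "lnb p (p!k) x \<longleftrightarrow> x = p!(k-1) \<or> x = p!Suc k"
proof
  assume "lnb p (p!k) x"
  moreover have "k < length p" using assms by simp
  ultimately show "x = p!(k-1) \<or> x = p!Suc k"
    using lnb_nth_cases[OF assms(1)] by blast
next
  assume "x = p!(k-1) \<or> x = p!Suc k"
  then show "lnb p (p!k) x" unfolding lnb_nth
  proof
    assume "x = p!(k-1)" then show "\<exists>i. Suc i < length p \<and> (p ! i = p ! k \<and> p ! Suc i = x \<or> p ! i = x \<and> p ! Suc i = p ! k)"
      using assms by (intro exI[of _ "k-1"]) auto
  next
    assume "x = p!Suc k" then show "\<exists>i. Suc i < length p \<and> (p ! i = p ! k \<and> p ! Suc i = x \<or> p ! i = x \<and> p ! Suc i = p ! k)"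
      using assms by (intro exI[of _ "k"]) auto
  qed
qed

lemma intr_pos:
  assumes "distinct p"
  shows "v \<in> intr p \<longleftrightarrow> (\<exists>k. 0 < k \<and> Suc k < length p \<and> p!k = v)"
proof
  assume "v \<in> intr p"
  then obtain x y where xy: "x \<noteq> y" "lnb p v x" "lnb p v y" unfolding intr_def by blast
  then have "v \<in> set p" using lnb_set by metis
  then obtain k where k: "k < length p" "p!k = v" by (metis in_set_conv_nth)
  have "(0 < k \<and> x = p!(k-1)) \<or> (Suc k < length p \<and> x = p!Suc k)"
       "(0 < k \<and> y = p!(k-1)) \<or> (Suc k < length p \<and> y = p!Suc k)"
    using lnb_nth_cases[OF assms k(1)] xy k by auto
  then show "\<exists>k. 0 < k \<and> Suc k < length p \<and> p!k = v" using xy(1) k by auto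
next
  assume "\<exists>k. 0 < k \<and> Suc k < length p \<and> p!k = v"
  then obtain k where k: "0 < k" "Suc k < length p" "p!k = v" by blast
  have "p!(k-1) \<noteq> p!Suc k" using assms k by (simp add: nth_eq_iff_index_eq)
  then show "v \<in> intr p" unfolding intr_def using lnb_pos[OF assms k(1,2)] k(3) by blast
qed

lemma intr_lnbs:
  assumes "distinct p" "0 < k" "Suc k < length p"
  shows "{x. lnb p (p!k) x} = {p!(k-1), p!Suc k}" "p!(k-1) \<noteq> p!Suc k"
  using lnb_pos[OF assms] apply blast
  using assms by (simp add: nth_eq_iff_index_eq)

lemma lnb_three:
  assumes "distinct p" "lnb p v x" "lnb p v y" "lnb p v z"
  shows "x = y \<or> x = z \<or> y = z"
proof -
  have "v \<in> set p" using assms lnb_set by metis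
  then obtain k where k: "k < length p" "p!k = v" by (metis in_set_conv_nth)
  show ?thesis using lnb_nth_cases[OF assms(1) k(1)] assms k by metis
qed

lemma endpoint:
  assumes "distinct p" "v \<in> set p" "v \<notin> intr p"
  shows "v = hd p \<or> v = last p"
proof -
  obtain k where k: "k < length p" "p!k = v" using assms by (metis in_set_conv_nth)
  have "\<not> (0 < k \<and> Suc k < length p)" using intr_pos[OF assms(1)] assms(3) k by blast
  then have "k = 0 \<or> Suc k = length p" using k(1) by auto
  then show ?thesis using k
    by (metis One_nat_def diff_Suc_1 hd_conv_nth last_conv_nth length_greater_0_conv list.size(3) nat.distinct(1))
qed

lemma hd_last_not_intr:
  assumes "distinct p"
  shows "hd p \<notin> intr p" "last p \<notin> intr p"
proof -
  show "hd p \<notin> intr p"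
  proof
    assume "hd p \<in> intr p"
    then obtain k where k: "0 < k" "Suc k < length p" "p!k = hd p" using intr_pos[OF assms] by blast
    then have "p!k = p!0" by (metis hd_conv_nth list.size(3) not_less_zero)
    then show False using k nth_eq_iff_index_eq[OF assms, of k 0] by (metis Suc_lessD gr_implies_not0 less_trans zero_less_Suc)
  qed
  show "last p \<notin> intr p"
  proof
    assume "last p \<in> intr p"
    then obtain k where k: "0 < k" "Suc k < length p" "p!k = last p" using intr_pos[OF assms] by blast
    then have "p!k = p!(length p - 1)" by (metis last_conv_nth list.size(3) not_less_zero)
    moreover have "length p - 1 < length p" using k by auto
    ultimately have "k = length p - 1" using k nth_eq_iff_index_eq[OF assms, of k "length p - 1"] by auto
    then show False using k by auto
  qed
qed

lemma crossing:
  assumes "v \<in> set z" "v \<in> I" "w \<in> set z" "w \<notin> I"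
  shows "\<exists>x y. lnb z x y \<and> x \<in> I \<and> y \<notin> I"
  using assms
proof (induction z arbitrary: v w)
  case Nil then show ?case by simp
next
  case (Cons c zs)
  show ?case
  proof (cases zs)
    case Nil then show ?thesis using Cons.prems by auto
  next
    case (Cons d zs')
    show ?thesis
    proof (cases "(c \<in> I) = (d \<in> I)")
      case False
      then show ?thesis using Cons by (metis lnb.simps(1))
    next
      case True
      have "\<exists>x y. lnb zs x y \<and> x \<in> I \<and> y \<notin> I"
      proof (cases "c \<in> I")
        case ci: True
        then have "w \<in> set zs" using Cons.prems by auto
        then show ?thesis using Cons.IH[of d w] True ci Cons Cons.prems by auto
      next
        case ci: False
        then have "v \<in> set zs" using Cons.prems by auto
        then show ?thesis using Cons.IH[of v d] True ci Cons Cons.prems by auto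
      qed
      then show ?thesis using lnb_Cons by metis
    qed
  qed
qed

lemma intr_map:
  assumes "inj_on f (set p)"
  shows "intr (map f p) = f ` intr p"
proof
  show "intr (map f p) \<subseteq> f ` intr p"
  proof
    fix v assume "v \<in> intr (map f p)"
    then obtain x y where xy: "x \<noteq> y" "lnb (map f p) v x" "lnb (map f p) v y" unfolding intr_def by blast
    obtain v0 x0 where 0: "lnb p v0 x0" "f v0 = v" "f x0 = x" using xy lnb_map by metis
    obtain v1 y1 where 1: "lnb p v1 y1" "f v1 = v" "f y1 = y" using xy lnb_map by metis
    have "v0 = v1" using 0 1 assms lnb_set by (metis inj_onD)
    moreover have "x0 \<noteq> y1" using 0 1 xy(1) by auto
    ultimately have "v0 \<in> intr p" unfolding intr_def using 0 1 by blast
    then show "v \<in> f ` intr p" using 0 by auto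
  qed
next
  show "f ` intr p \<subseteq> intr (map f p)"
  proof
    fix v assume "v \<in> f ` intr p"
    then obtain v0 x0 y0 where "x0 \<noteq> y0" "lnb p v0 x0" "lnb p v0 y0" "v = f v0" unfolding intr_def by blast
    moreover have "f x0 \<noteq> f y0" using calculation assms lnb_set by (metis inj_onD)
    ultimately show "v \<in> intr (map f p)" unfolding intr_def lnb_map by blast
  qed
qed

lemma filter_split:
  assumes "distinct p" "a \<in> set p"
  obtains xs ys where "p = xs @ a # ys" "filter (\<lambda>x. x \<noteq> a) p = xs @ ys" "a \<notin> set xs" "a \<notin> set ys"
proof -
  obtain xs ys where p: "p = xs @ a # ys" using assms by (metis split_list)
  then have "a \<notin> set xs" "a \<notin> set ys" using assms by auto
  moreover have "filter (\<lambda>x. x \<noteq> a) xs = xs" "filter (\<lambda>x. x \<noteq> a) ys = ys"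
    using calculation by (auto simp: filter_id_conv)
  moreover then have "filter (\<lambda>x. x \<noteq> a) p = xs @ ys" using p by simp
  ultimately show ?thesis using that p by blast
qed

lemma lnb_filter:
  assumes "distinct p" "a \<in> set p"
  shows "lnb (filter (\<lambda>x. x \<noteq> a) p) v w \<longleftrightarrow>
     (lnb p v w \<and> v \<noteq> a \<and> w \<noteq> a) \<or> (lnb p v a \<and> lnb p a w \<and> v \<noteq> w)"
proof -
  obtain xs ys where s: "p = xs @ a # ys" "filter (\<lambda>x. x \<noteq> a) p = xs @ ys" "a \<notin> set xs" "a \<notin> set ys"
    using filter_split[OF assms] by blast
  have dj: "set xs \<inter> set ys = {}" using assms(1) s(1) by auto
  have d: "xs \<noteq> [] \<Longrightarrow> ys \<noteq> [] \<Longrightarrow> last xs \<noteq> hd ys"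
    using dj by (metis disjoint_iff last_in_set hd_in_set)
  have n1: "\<And>x. \<not> lnb xs x a" "\<And>x. \<not> lnb ys x a" using s(3,4) lnb_set by metis+
  have n2: "xs \<noteq> [] \<Longrightarrow> last xs \<noteq> a" "ys \<noteq> [] \<Longrightarrow> hd ys \<noteq> a" using s(3,4) by auto
  have la: "\<And>v. lnb p v a \<longleftrightarrow> (xs \<noteq> [] \<and> v = last xs) \<or> (ys \<noteq> [] \<and> v = hd ys)"
    unfolding s(1) lnb_append lnb_Cons using n1 n2 by auto
  show ?thesis
  proof
    assume "lnb (filter (\<lambda>x. x \<noteq> a) p) v w"
    then have "lnb (xs @ ys) v w" using s(2) by simp
    then consider "lnb xs v w" | "lnb ys v w" | "xs \<noteq> [] \<and> ys \<noteq> [] \<and> ((last xs = v \<and> hd ys = w) \<or> (last xs = w \<and> hd ys = v))"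
      unfolding lnb_append by blast
    then show "(lnb p v w \<and> v \<noteq> a \<and> w \<noteq> a) \<or> (lnb p v a \<and> lnb p a w \<and> v \<noteq> w)"
    proof cases
      case 1
      have "lnb p v w" using 1 unfolding s(1) lnb_append by simp
      moreover have "v \<noteq> a" "w \<noteq> a" using 1 s(3) lnb_set by metis+
      ultimately show ?thesis by blast
    next
      case 2
      have "lnb (a#ys) v w" using 2 by (simp add: lnb_Cons)
      then have "lnb p v w" unfolding s(1) lnb_append by simp
      moreover have "v \<noteq> a" "w \<noteq> a" using 2 s(4) lnb_set by metis+
      ultimately show ?thesis by blast
    next
      case 3
      have "lnb p (last xs) a" "lnb p (hd ys) a" using 3 la by auto
      then show ?thesis using 3 d lnb_sym by metis
    qed
  next
    assume "(lnb p v w \<and> v \<noteq> a \<and> w \<noteq> a) \<or> (lnb p v a \<and> lnb p a w \<and> v \<noteq> w)"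
    then consider "lnb p v w" "v \<noteq> a" "w \<noteq> a" | "lnb p v a" "lnb p a w" "v \<noteq> w" by blast
    then have "lnb (xs @ ys) v w"
    proof cases
      case 1
      then have "lnb xs v w \<or> lnb (a # ys) v w \<or> (xs \<noteq> [] \<and> ((last xs = v \<and> a = w) \<or> (last xs = w \<and> a = v)))"
        unfolding s(1) lnb_append by simp
      then have "lnb xs v w \<or> lnb ys v w" using 1 unfolding lnb_Cons by auto
      then show ?thesis unfolding lnb_append by blast
    next
      case 2
      have "lnb p w a" using 2 lnb_sym by metis
      then show ?thesis using la 2 unfolding lnb_append by metis
    qed
    then show "lnb (filter (\<lambda>x. x \<noteq> a) p) v w" using s(2) by simp
  qed
qed


lemma intr_filter:
  assumes "distinct p" "a \<in> set p" "v \<in> intr (filter (\<lambda>x. x \<noteq> a) p)"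
  shows "v \<in> intr p" "lnb p v a \<Longrightarrow> a \<in> intr p"
proof -
  obtain x y where xy: "x \<noteq> y" "lnb (filter (\<lambda>x. x \<noteq> a) p) v x" "lnb (filter (\<lambda>x. x \<noteq> a) p) v y"
    using assms(3) unfolding intr_def by blast
  have X: "(lnb p v x \<and> v \<noteq> a \<and> x \<noteq> a) \<or> (lnb p v a \<and> lnb p a x \<and> v \<noteq> x)"
    using xy(2) lnb_filter[OF assms(1,2)] by blast
  have Y: "(lnb p v y \<and> v \<noteq> a \<and> y \<noteq> a) \<or> (lnb p v a \<and> lnb p a y \<and> v \<noteq> y)"
    using xy(3) lnb_filter[OF assms(1,2)] by blast
  show "v \<in> intr p"
  proof -
    { assume "lnb p v a" "lnb p a x" "v \<noteq> x" "lnb p a y" "v \<noteq> y"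
      then have False using lnb_three[OF assms(1), of a v x y] xy(1) lnb_sym[of p v a] by blast }
    then show ?thesis using X Y xy(1) unfolding intr_def by blast
  qed
  show "a \<in> intr p" if la: "lnb p v a"
  proof -
    { assume "lnb p v x" "x \<noteq> a" "lnb p v y" "y \<noteq> a"
      then have False using lnb_three[OF assms(1), of v x y a] xy(1) la by blast }
    then have "(lnb p a x \<and> v \<noteq> x) \<or> (lnb p a y \<and> v \<noteq> y)" using X Y by blast
    moreover have "lnb p a v" using la lnb_sym by metis
    ultimately show ?thesis unfolding intr_def by blast
  qed
qed


lemma lnb_neq: "distinct p \<Longrightarrow> lnb p v w \<Longrightarrow> v \<noteq> w"
  unfolding lnb_nth by (auto simp: nth_eq_iff_index_eq)




locale pcx =
  fixes V :: "nat set" and Adj :: "nat \<Rightarrow> nat \<Rightarrow> bool" and P :: "nat set"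
    and pth :: "nat \<Rightarrow> nat list" and eps :: nat
  assumes sg: "simple_graph V Adj"
    and pcc: "path_circular_collection V Adj P pth"
    and epsP: "eps \<in> P"
    and une: "pth eps \<noteq> []"
begin

abbreviation "u \<equiv> pth eps"
abbreviation "n \<equiv> length u"
definition "a = u ! (n - 1)"
definition "b = u ! (n - 2)"

lemma finV: "finite V" using sg unfolding simple_graph_def by blast
lemma adjV: "Adj v w \<Longrightarrow> v \<in> V \<and> w \<in> V \<and> v \<noteq> w" using sg unfolding simple_graph_def by blast
lemma adj_sym: "Adj v w \<Longrightarrow> Adj w v" using sg unfolding simple_graph_def by blast
lemma finP: "finite P" using pcc unfolding path_circular_collection_def by blast

lemma ispath: "x \<in> P \<Longrightarrow> is_path V Adj (pth x)"
  using pcc unfolding path_circular_collection_def by blast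
lemma pdist: "x \<in> P \<Longrightarrow> distinct (pth x)" using ispath unfolding is_path_def by blast
lemma pset: "x \<in> P \<Longrightarrow> set (pth x) \<subseteq> V" using ispath unfolding is_path_def by blast
lemma padj: "x \<in> P \<Longrightarrow> lnb (pth x) v w \<Longrightarrow> Adj v w"
  using ispath chain_lnb[of Adj "pth x", OF adj_sym] unfolding is_path_def by blast

lemma pcc_int: "x \<in> P \<Longrightarrow> 0 < i \<Longrightarrow> Suc i < length (pth x) \<Longrightarrow>
   degree V Adj (pth x ! i) = 2 \<and> (\<forall>y\<in>P. pth x ! i \<in> set (pth y) \<longrightarrow>
              hd (pth x) \<in> set (pth y) \<or> last (pth x) \<in> set (pth y))"
  using pcc unfolding path_circular_collection_def by blast

lemma nbr_int:
  assumes "x \<in> P" "v \<in> intr (pth x)"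
  shows "Adj v w \<longleftrightarrow> lnb (pth x) v w"
proof -
  let ?p = "pth x"
  obtain k where k: "0 < k" "Suc k < length ?p" "?p!k = v" using intr_pos[OF pdist[OF assms(1)]] assms(2) by blast
  have L: "{w. lnb ?p v w} = {?p!(k-1), ?p!Suc k}" "?p!(k-1) \<noteq> ?p!Suc k"
    using intr_lnbs[OF pdist[OF assms(1)] k(1,2)] k(3) by auto
  have sub: "{?p!(k-1), ?p!Suc k} \<subseteq> {w\<in>V. Adj v w}"
    using L(1) padj[OF assms(1)] adjV by blast
  have "card {w\<in>V. Adj v w} = 2" using pcc_int[OF assms(1) k(1,2)] k(3) unfolding degree_def by simp
  moreover have "card {?p!(k-1), ?p!Suc k} = 2" using L(2) by simp
  ultimately have "{?p!(k-1), ?p!Suc k} = {w\<in>V. Adj v w}"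
    using card_subset_eq[OF _ sub] finV by simp
  then show ?thesis using L(1) adjV by blast
qed

lemma cond2:
  assumes "x \<in> P" "z \<in> P" "v \<in> intr (pth x)" "v \<in> set (pth z)"
  shows "hd (pth x) \<in> set (pth z) \<or> last (pth x) \<in> set (pth z)"
proof -
  obtain k where k: "0 < k" "Suc k < length (pth x)" "pth x!k = v" using intr_pos[OF pdist[OF assms(1)]] assms(3) by blast
  then show ?thesis using pcc_int[OF assms(1) k(1,2)] assms by blast
qed

lemma O3:
  assumes "x \<in> P" "z \<in> P" "pth z \<noteq> []"
  shows "\<not> set (pth z) \<subseteq> intr (pth x)"
proof
  assume s: "set (pth z) \<subseteq> intr (pth x)"
  obtain v where "v \<in> set (pth z)" using assms(3) by (meson list.set_sel(1))
  then have "hd (pth x) \<in> set (pth z) \<or> last (pth x) \<in> set (pth z)" using cond2[OF assms(1,2)] s by blast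
  then show False using s hd_last_not_intr[OF pdist[OF assms(1)]] by blast
qed

lemma ud: "distinct u" using pdist epsP by blast
lemma npos: "0 < n" using une by simp
lemma uV: "j < n \<Longrightarrow> u!j \<in> V" using pset[OF epsP] by (meson nth_mem subsetD)
lemma uinj: "i < n \<Longrightarrow> j < n \<Longrightarrow> u!i = u!j \<longleftrightarrow> i = j" using ud by (simp add: nth_eq_iff_index_eq)
lemma a_last: "a = last u" unfolding a_def using une by (simp add: last_conv_nth)
lemma a_in: "a \<in> set u" unfolding a_def using une by simp
lemma hd_u: "hd u = u!0" using une by (simp add: hd_conv_nth)

lemma thr_adj: "Suc j < n \<Longrightarrow> Adj (u!j) (u!Suc j)"
  using padj[OF epsP] unfolding lnb_nth by blast

lemma thr_int: "0 < j \<Longrightarrow> Suc j < n \<Longrightarrow> u!j \<in> intr u"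
  using intr_pos[OF ud] by blast

lemma thr_nb: "0 < j \<Longrightarrow> Suc j < n \<Longrightarrow> Adj (u!j) w \<longleftrightarrow> w = u!(j-1) \<or> w = u!Suc j"
  using nbr_int[OF epsP thr_int] lnb_pos[OF ud] by metis

lemma ab_adj: "2 \<le> n \<Longrightarrow> Adj b a"
  unfolding a_def b_def using thr_adj[of "n-2"] by (simp add: numeral_2_eq_2 Suc_diff_Suc)

lemma cond2_u: "z \<in> P \<Longrightarrow> 0 < j \<Longrightarrow> Suc j < n \<Longrightarrow> u!j \<in> set (pth z) \<Longrightarrow> u!0 \<in> set (pth z) \<or> a \<in> set (pth z)"
  using cond2[OF epsP _ thr_int] hd_u a_last by metis

end



context pcx begin

lemma SEG:
  assumes z: "z \<in> P" and l: "0 < l" "l \<le> r" "Suc r < n"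
    and inZ: "\<forall>i. l \<le> i \<and> i \<le> r \<longrightarrow> u!i \<in> set (pth z)"
    and out: "w \<in> set (pth z)" "w \<notin> {u!i |i. l \<le> i \<and> i \<le> r}"
  shows "(u!(l-1) \<in> set (pth z) \<and> lnb (pth z) (u!(l-1)) (u!l)) \<or> (u!Suc r \<in> set (pth z) \<and> lnb (pth z) (u!r) (u!Suc r))"
proof -
  let ?W = "{u!i |i. l \<le> i \<and> i \<le> r}"
  have "u!l \<in> set (pth z)" "u!l \<in> ?W" using inZ l by auto
  then obtain x y where xy: "lnb (pth z) x y" "x \<in> ?W" "y \<notin> ?W" using crossing[OF _ _ out] by blast
  obtain i where i: "l \<le> i" "i \<le> r" "x = u!i" using xy(2) by blast
  have "Adj x y" using padj[OF z xy(1)] .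
  then have "y = u!(i-1) \<or> y = u!Suc i" using thr_nb[of i y] i l by auto
  then show ?thesis
  proof
    assume y: "y = u!(i-1)"
    then have "\<not> (l \<le> i - 1)" using xy(3) i by auto
    then have "i = l" using i by auto
    then show ?thesis using y xy(1) i lnb_set lnb_sym by metis
  next
    assume y: "y = u!Suc i"
    then have "\<not> (Suc i \<le> r)" using xy(3) i by auto
    then have "i = r" using i by auto
    then show ?thesis using y xy(1) i lnb_set by metis
  qed
qed

lemma ARC:
  assumes z: "z \<in> P" and j: "0 < j" "Suc j < n" and uj: "u!j \<in> set (pth z)"
  shows "(\<forall>i\<le>j. u!i \<in> set (pth z)) \<or> (\<forall>i. j \<le> i \<and> i < n \<longrightarrow> u!i \<in> set (pth z))"
proof (rule ccontr)
  assume nc: "\<not> ?thesis"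
  let ?Z = "set (pth z)"
  define A where "A = {l. l \<le> j \<and> (\<forall>i. l \<le> i \<and> i \<le> j \<longrightarrow> u!i \<in> ?Z)}"
  define B where "B = {r. j \<le> r \<and> r < n \<and> (\<forall>i. j \<le> i \<and> i \<le> r \<longrightarrow> u!i \<in> ?Z)}"
  have jA: "j \<in> A" using uj unfolding A_def by auto
  have jB: "j \<in> B" using uj j unfolding B_def by auto
  have fA: "finite A" unfolding A_def by auto
  have fB: "finite B" unfolding B_def by auto
  define L where "L = Min A"
  define R where "R = Max B"
  have LA: "L \<in> A" using Min_in[OF fA] jA unfolding L_def by blast
  have RB: "R \<in> B" using Max_in[OF fB] jB unfolding R_def by blast
  have Lmin: "\<And>l. l \<in> A \<Longrightarrow> L \<le> l" using fA unfolding L_def by simp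
  have Rmax: "\<And>r. r \<in> B \<Longrightarrow> r \<le> R" using fB unfolding R_def by simp
  have L0: "0 < L"
  proof (rule ccontr)
    assume "\<not> 0 < L" then have "L = 0" by simp
    then have "\<forall>i\<le>j. u!i \<in> ?Z" using LA unfolding A_def by auto
    then show False using nc by blast
  qed
  have Rn: "Suc R < n"
  proof (rule ccontr)
    assume "\<not> Suc R < n" then have "R = n - 1" using RB unfolding B_def by auto
    then have "\<forall>i. j \<le> i \<and> i < n \<longrightarrow> u!i \<in> ?Z" using RB unfolding B_def by auto
    then show False using nc by blast
  qed
  have LR: "L \<le> R" using LA RB unfolding A_def B_def by auto
  have inZ: "\<forall>i. L \<le> i \<and> i \<le> R \<longrightarrow> u!i \<in> ?Z"
  proof (intro allI impI)
    fix i assume i: "L \<le> i \<and> i \<le> R"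
    show "u!i \<in> ?Z"
    proof (cases "i \<le> j")
      case True then show ?thesis using LA i unfolding A_def by auto
    next
      case False then show ?thesis using RB i unfolding B_def by auto
    qed
  qed
  obtain w where w: "w \<in> ?Z" "w = u!0 \<or> w = a" using cond2_u[OF z j uj] by blast
  have wout: "w \<notin> {u!i |i. L \<le> i \<and> i \<le> R}"
  proof
    assume "w \<in> {u!i |i. L \<le> i \<and> i \<le> R}"
    then obtain i where i: "L \<le> i" "i \<le> R" "w = u!i" by blast
    have "i < n" using i Rn by auto
    show False using w(2)
    proof
      assume "w = u!0" then have "i = 0" using uinj[of i 0] i \<open>i < n\<close> npos by auto
      then show False using i L0 by auto
    next
      assume "w = a" then have "i = n - 1" using uinj[of i "n-1"] i \<open>i < n\<close> npos unfolding a_def by auto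
      then show False using i Rn by auto
    qed
  qed
  have "(u!(L-1) \<in> ?Z \<and> lnb (pth z) (u!(L-1)) (u!L)) \<or> (u!Suc R \<in> ?Z \<and> lnb (pth z) (u!R) (u!Suc R))"
    using SEG[OF z L0 LR Rn inZ w(1) wout] .
  then show False
  proof
    assume H: "u!(L-1) \<in> ?Z \<and> lnb (pth z) (u!(L-1)) (u!L)"
    have "\<forall>i. L - 1 \<le> i \<and> i \<le> j \<longrightarrow> u!i \<in> ?Z"
    proof (intro allI impI)
      fix i assume i: "L - 1 \<le> i \<and> i \<le> j"
      show "u!i \<in> ?Z"
      proof (cases "i = L - 1")
        case True then show ?thesis using H by simp
      next
        case False then have "L \<le> i" using i by auto
        then show ?thesis using LA i unfolding A_def by blast
      qed
    qed
    moreover have "L - 1 \<le> j" using LA unfolding A_def by auto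
    ultimately have "L - 1 \<in> A" unfolding A_def by blast
    then have "L \<le> L - 1" using Lmin by blast
    then show False using L0 by linarith
  next
    assume H: "u!Suc R \<in> ?Z \<and> lnb (pth z) (u!R) (u!Suc R)"
    have "\<forall>i. j \<le> i \<and> i \<le> Suc R \<longrightarrow> u!i \<in> ?Z"
    proof (intro allI impI)
      fix i assume i: "j \<le> i \<and> i \<le> Suc R"
      show "u!i \<in> ?Z"
      proof (cases "i = Suc R")
        case True then show ?thesis using H by simp
      next
        case False then have "i \<le> R" using i by auto
        then show ?thesis using RB i unfolding B_def by blast
      qed
    qed
    moreover have "j \<le> Suc R" using RB unfolding B_def by auto
    ultimately have "Suc R \<in> B" using Rn unfolding B_def by blast
    then have "Suc R \<le> R" using Rmax by blast
    then show False by linarith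
  qed
qed

definition sfx :: "nat \<Rightarrow> nat \<Rightarrow> bool" where
  "sfx z j = (\<forall>i. j \<le> i \<and> i < n \<longrightarrow> u!i \<in> set (pth z))"
definition mr :: "nat \<Rightarrow> nat" where
  "mr z = (LEAST j. sfx z j)"

lemma sfx_n: "sfx z n" unfolding sfx_def by auto
lemma sfx_mr: "sfx z (mr z)" unfolding mr_def by (rule LeastI[of "sfx z", OF sfx_n])
lemma mr_le: "sfx z j \<Longrightarrow> mr z \<le> j" unfolding mr_def by (rule Least_le)
lemma mr_n: "mr z \<le> n" using mr_le sfx_n by blast
lemma sfx_last: "sfx z (n - 1) \<longleftrightarrow> a \<in> set (pth z)"
proof
  assume "sfx z (n - 1)" then show "a \<in> set (pth z)" unfolding sfx_def a_def using npos by simp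
next
  assume A: "a \<in> set (pth z)"
  show "sfx z (n - 1)" unfolding sfx_def
  proof (intro allI impI)
    fix i assume "n - 1 \<le> i \<and> i < n"
    then have "i = n - 1" by auto
    then show "u!i \<in> set (pth z)" using A unfolding a_def by simp
  qed
qed
lemma sfx_0: "sfx z 0 \<longleftrightarrow> set u \<subseteq> set (pth z)"
proof
  assume S: "sfx z 0"
  show "set u \<subseteq> set (pth z)"
  proof
    fix x assume "x \<in> set u"
    then obtain i where "i < n" "x = u!i" by (metis in_set_conv_nth)
    then show "x \<in> set (pth z)" using S unfolding sfx_def by blast
  qed
next
  assume "set u \<subseteq> set (pth z)"
  then show "sfx z 0" unfolding sfx_def using nth_mem by blast
qed

definition "shift z \<longleftrightarrow> a \<in> set (pth z) \<and> \<not> set u \<subseteq> set (pth z)"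

lemma shiftD:
  assumes "shift z"
  shows "0 < mr z" "mr z \<le> n - 1" "u!(mr z - 1) \<notin> set (pth z)"
    "\<And>i. mr z \<le> i \<Longrightarrow> i < n \<Longrightarrow> u!i \<in> set (pth z)" "2 \<le> n"
proof -
  show m0: "0 < mr z"
  proof (rule ccontr)
    assume "\<not> 0 < mr z" then have "mr z = 0" by simp
    then have "sfx z 0" using sfx_mr by metis
    then show False using assms sfx_0 unfolding shift_def by blast
  qed
  show m1: "mr z \<le> n - 1" using assms sfx_last mr_le unfolding shift_def by blast
  show "u!(mr z - 1) \<notin> set (pth z)"
  proof
    assume "u!(mr z - 1) \<in> set (pth z)"
    have "sfx z (mr z - 1)" unfolding sfx_def
    proof (intro allI impI)
      fix i assume i: "mr z - 1 \<le> i \<and> i < n"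
      show "u!i \<in> set (pth z)"
      proof (cases "i = mr z - 1")
        case True then show ?thesis using \<open>u!(mr z - 1) \<in> set (pth z)\<close> by simp
      next
        case False then have "mr z \<le> i" using i by auto
        then show ?thesis using sfx_mr i unfolding sfx_def by blast
      qed
    qed
    then show False using mr_le m0 by fastforce
  qed
  show "\<And>i. mr z \<le> i \<Longrightarrow> i < n \<Longrightarrow> u!i \<in> set (pth z)" using sfx_mr unfolding sfx_def by blast
  show "2 \<le> n" using m0 m1 by auto
qed

definition idx :: "nat \<Rightarrow> nat" where
  "idx v = (THE i. i < n \<and> u!i = v)"

lemma idx_nth: "i < n \<Longrightarrow> idx (u!i) = i"
  unfolding idx_def using uinj by (metis (mono_tags, lifting) the_equality)
lemma idx_in: "v \<in> set u \<Longrightarrow> idx v < n \<and> u!(idx v) = v"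
  by (metis idx_nth in_set_conv_nth)

definition sig :: "nat \<Rightarrow> nat \<Rightarrow> nat" where
  "sig z v = (if v \<in> set u \<and> mr z \<le> idx v then u!(idx v - 1) else v)"

definition inrun :: "nat \<Rightarrow> nat \<Rightarrow> bool" where
  "inrun z v \<longleftrightarrow> (\<exists>i. mr z \<le> i \<and> i < n \<and> v = u!i)"

lemma inrun_iff: "inrun z v \<longleftrightarrow> v \<in> set u \<and> mr z \<le> idx v"
  unfolding inrun_def by (metis idx_in idx_nth nth_mem)

lemma sig_run: "mr z \<le> i \<Longrightarrow> i < n \<Longrightarrow> sig z (u!i) = u!(i-1)"
  unfolding sig_def by (simp add: idx_nth)
lemma sig_nrun: "\<not> inrun z v \<Longrightarrow> sig z v = v"
  unfolding sig_def inrun_iff by auto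

definition pth' :: "nat \<Rightarrow> nat list" where
  "pth' z = (if a \<notin> set (pth z) then pth z
     else if set u \<subseteq> set (pth z) then filter (\<lambda>v. v \<noteq> a) (pth z)
     else map (sig z) (pth z))"

definition "V' = V - {a}"
definition Adj' :: "nat \<Rightarrow> nat \<Rightarrow> bool" where
  "Adj' v w \<longleftrightarrow> v \<in> V' \<and> w \<in> V' \<and> v \<noteq> w \<and>
     (Adj v w \<or> (2 \<le> n \<and> ((v = b \<and> Adj a w) \<or> (w = b \<and> Adj a v))))"

lemma a_run: "shift z \<Longrightarrow> inrun z a"
  unfolding inrun_def a_def using shiftD(2)[of z] npos by (intro exI[of _ "n-1"]) auto

lemma b_idx: "2 \<le> n \<Longrightarrow> b = u!(n-2) \<and> n - 2 < n" unfolding b_def by auto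
lemma a_ne_b: "2 \<le> n \<Longrightarrow> a \<noteq> b" unfolding a_def b_def using uinj by auto

lemma set_pth'_1: "a \<notin> set (pth z) \<Longrightarrow> set (pth' z) = set (pth z)"
  unfolding pth'_def by simp
lemma set_pth'_2: "a \<in> set (pth z) \<Longrightarrow> set u \<subseteq> set (pth z) \<Longrightarrow> set (pth' z) = set (pth z) - {a}"
  unfolding pth'_def by auto

lemma set_pth'_3:
  assumes sh: "shift z"
  shows "set (pth' z) = insert (u!(mr z - 1)) (set (pth z) - {a})"
proof -
  note D = shiftD[OF sh]
  have pe: "pth' z = map (sig z) (pth z)" using sh unfolding pth'_def shift_def by auto
  have "sig z ` set (pth z) = insert (u!(mr z - 1)) (set (pth z) - {a})"
  proof
    show "sig z ` set (pth z) \<subseteq> insert (u!(mr z - 1)) (set (pth z) - {a})"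
    proof
      fix x assume "x \<in> sig z ` set (pth z)"
      then obtain v where v: "v \<in> set (pth z)" "x = sig z v" by blast
      show "x \<in> insert (u!(mr z - 1)) (set (pth z) - {a})"
      proof (cases "inrun z v")
        case False
        then show ?thesis using v sig_nrun a_run[OF sh] by auto
      next
        case True
        then obtain i where i: "mr z \<le> i" "i < n" "v = u!i" unfolding inrun_def by blast
        then have x: "x = u!(i-1)" using v sig_run by simp
        show ?thesis
        proof (cases "i = mr z")
          case True then show ?thesis using x by simp
        next
          case False
          then have "u!(i-1) \<in> set (pth z)" using D(4)[of "i-1"] i by auto
          moreover have "u!(i-1) \<noteq> a" unfolding a_def using uinj i D by auto
          ultimately show ?thesis using x by simp
        qed
      qed
    qed
  next
    show "insert (u!(mr z - 1)) (set (pth z) - {a}) \<subseteq> sig z ` set (pth z)"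
    proof
      fix x assume x: "x \<in> insert (u!(mr z - 1)) (set (pth z) - {a})"
      show "x \<in> sig z ` set (pth z)"
      proof (cases "x = u!(mr z - 1)")
        case True
        then have "x = sig z (u!(mr z))" using sig_run[of z "mr z"] D by auto
        moreover have "u!(mr z) \<in> set (pth z)" using D by auto
        ultimately show ?thesis by blast
      next
        case False
        then have xz: "x \<in> set (pth z)" "x \<noteq> a" using x by auto
        show ?thesis
        proof (cases "inrun z x")
          case False then show ?thesis using xz sig_nrun by (metis image_eqI)
        next
          case True
          then obtain i where i: "mr z \<le> i" "i < n" "x = u!i" unfolding inrun_def by blast
          then have "i \<noteq> n - 1" using xz unfolding a_def by auto
          then have "x = sig z (u!Suc i)" using sig_run[of z "Suc i"] i by auto
          moreover have "u!Suc i \<in> set (pth z)" using D(4) i \<open>i \<noteq> n - 1\<close> by auto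
          ultimately show ?thesis by blast
        qed
      qed
    qed
  qed
  then show ?thesis using pe by simp
qed

lemma M1: "set (pth z) - {a} \<subseteq> set (pth' z)"
  using set_pth'_1 set_pth'_2 set_pth'_3 unfolding shift_def by (cases "a \<in> set (pth z)") auto

lemma M2:
  assumes "a \<in> set (pth z)" "2 \<le> n"
  shows "b \<in> set (pth' z)"
proof (cases "set u \<subseteq> set (pth z)")
  case True
  then have "b \<in> set (pth z)" using b_idx[OF assms(2)] by (metis nth_mem subsetD)
  then show ?thesis using M1[of z] a_ne_b[OF assms(2)] by auto
next
  case False
  then have sh: "shift z" using assms unfolding shift_def by simp
  note D = shiftD[OF sh]
  show ?thesis
  proof (cases "mr z = n - 1")
    case True then show ?thesis using set_pth'_3[OF sh] unfolding b_def by (simp add: numeral_2_eq_2)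
  next
    case False
    then have "b \<in> set (pth z)" using D(2) D(4)[of "n-2"] b_idx[OF assms(2)] by auto
    then show ?thesis using M1[of z] a_ne_b[OF assms(2)] by auto
  qed
qed

lemma K2:
  assumes "v \<in> set (pth' z)" "v \<notin> set (pth z)"
  shows "shift z \<and> v = u!(mr z - 1)"
proof (cases "a \<in> set (pth z)")
  case False then show ?thesis using assms set_pth'_1 by blast
next
  case True
  show ?thesis
  proof (cases "set u \<subseteq> set (pth z)")
    case True then show ?thesis using assms set_pth'_2 \<open>a \<in> set (pth z)\<close> by blast
  next
    case False
    then have sh: "shift z" using True unfolding shift_def by simp
    then show ?thesis using assms set_pth'_3[OF sh] by auto
  qed
qed

lemma pth'_V:
  assumes "z \<in> P"
  shows "set (pth' z) \<subseteq> V'"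
proof (cases "a \<in> set (pth z)")
  case False then show ?thesis using set_pth'_1 pset[OF assms] unfolding V'_def by blast
next
  case True
  show ?thesis
  proof (cases "set u \<subseteq> set (pth z)")
    case True then show ?thesis using set_pth'_2 \<open>a \<in> set (pth z)\<close> pset[OF assms] unfolding V'_def by blast
  next
    case False
    then have sh: "shift z" using True unfolding shift_def by simp
    note D = shiftD[OF sh]
    have "u!(mr z - 1) \<in> V" using uV D by auto
    moreover have "u!(mr z - 1) \<noteq> a" unfolding a_def using uinj D by auto
    ultimately show ?thesis using set_pth'_3[OF sh] pset[OF assms] unfolding V'_def by auto
  qed
qed

lemma G1:
  assumes z: "z \<in> P" and j: "0 < j" "j < n" and uj: "u!j \<in> set (pth z)"
  shows "u!(j-1) \<in> set (pth' z)"
proof (cases "u!(j-1) \<in> set (pth z)")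
  case True
  moreover have "u!(j-1) \<noteq> a" unfolding a_def using uinj j by auto
  ultimately show ?thesis using M1 by blast
next
  case False
  have sj: "sfx z j"
  proof (cases "Suc j < n")
    case True
    then show ?thesis using ARC[OF z j(1) True uj] False j unfolding sfx_def by auto
  next
    case False
    then have "j = n - 1" using j by auto
    then show ?thesis using sfx_last uj unfolding a_def by simp
  qed
  have "j \<le> n - 1" "n - 1 < n" using j by auto
  then have az: "a \<in> set (pth z)" using sj unfolding sfx_def a_def by blast
  have nf: "\<not> set u \<subseteq> set (pth z)" using False j by (meson less_imp_diff_less nth_mem subsetD)
  have sh: "shift z" using az nf unfolding shift_def by simp
  have "mr z \<le> j" using mr_le sj by blast
  moreover have "\<not> mr z < j"
  proof
    assume "mr z < j"
    then have "mr z \<le> j - 1" "j - 1 < n" using j by auto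
    then have "u!(j-1) \<in> set (pth z)" using sfx_mr[of z] unfolding sfx_def by blast
    then show False using False by simp
  qed
  ultimately have "mr z = j" by simp
  then show ?thesis using set_pth'_3[OF sh] by simp
qed

end



context pcx begin

lemma a_idx: "a = u!(n-1)" "n - 1 < n" unfolding a_def using npos by auto

lemma neq_a: "j < n - 1 \<Longrightarrow> u!j \<noteq> a"
  unfolding a_def using uinj[of j "n-1"] by auto

lemma g_inj: "(i::nat) \<noteq> f \<Longrightarrow> j \<noteq> f \<Longrightarrow> (if i < f then i else i - 1) = (if j < f then j else j - 1) \<Longrightarrow> i = j"
  by (cases "i < f"; cases "j < f") auto

lemma key1:
  assumes S: "S \<subseteq> P - {eps}" and inj: "inj_on \<phi> (insert eps S)"
    and ph: "\<forall>x\<in>insert eps S. \<phi> x \<in> V \<and> \<phi> x \<in> set (pth x)"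
  shows "\<exists>\<psi>. inj_on \<psi> S \<and> (\<forall>x\<in>S. \<psi> x \<in> V' \<and> \<psi> x \<in> set (pth' x))"
proof -
  define f where "f = idx (\<phi> eps)"
  have fe: "f < n" "u!f = \<phi> eps" using idx_in[of "\<phi> eps"] ph unfolding f_def by auto
  define g where "g j = (if j < f then j else j - 1)" for j
  define \<psi> where "\<psi> x = (if \<phi> x \<in> set u then u!(g (idx (\<phi> x))) else \<phi> x)" for x
  have neps: "\<phi> x \<noteq> \<phi> eps" if x: "x \<in> S" for x
  proof
    assume "\<phi> x = \<phi> eps"
    then have "x = eps" using inj_onD[OF inj] x by blast
    then show False using x S by blast
  qed
  have xinfo: "idx (\<phi> x) < n \<and> u!(idx (\<phi> x)) = \<phi> x \<and> idx (\<phi> x) \<noteq> f" if x: "x \<in> S" and xu: "\<phi> x \<in> set u" for x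
  proof -
    have "idx (\<phi> x) < n \<and> u!(idx (\<phi> x)) = \<phi> x" using idx_in[OF xu] .
    moreover have "idx (\<phi> x) \<noteq> f" using calculation neps[OF x] fe by auto
    ultimately show ?thesis by blast
  qed
  have mem: "\<psi> x \<in> set (pth' x)" if x: "x \<in> S" for x
  proof -
    have xP: "x \<in> P" using x S by auto
    have phx: "\<phi> x \<in> set (pth x)" using ph x by auto
    show ?thesis
    proof (cases "\<phi> x \<in> set u")
      case False
      then have "\<phi> x \<noteq> a" using a_in by auto
      then show ?thesis using M1[of x] phx False unfolding \<psi>_def by auto
    next
      case True
      define j where "j = idx (\<phi> x)"
      have j: "j < n" "u!j = \<phi> x" "j \<noteq> f" using xinfo[OF x True] unfolding j_def by auto
      show ?thesis
      proof (cases "j < f")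
        case True
        then have "u!j \<noteq> a" using neq_a fe by auto
        then show ?thesis using M1[of x] phx j True \<open>\<phi> x \<in> set u\<close> unfolding \<psi>_def g_def j_def by auto
      next
        case False
        then have "0 < j" "f < j" using j by auto
        then have "u!(j-1) \<in> set (pth' x)" using G1[OF xP _ j(1)] j(2) phx by auto
        then show ?thesis using False \<open>\<phi> x \<in> set u\<close> unfolding \<psi>_def g_def j_def by auto
      qed
    qed
  qed
  have injpsi: "inj_on \<psi> S"
  proof (rule inj_onI)
    fix x y assume x: "x \<in> S" and y: "y \<in> S" and e: "\<psi> x = \<psi> y"
    have "\<phi> x = \<phi> y"
    proof (cases "\<phi> x \<in> set u")
      case True
      note X = xinfo[OF x True]
      have gx: "g (idx (\<phi> x)) < n" using X unfolding g_def by auto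
      show ?thesis
      proof (cases "\<phi> y \<in> set u")
        case True
        note Y = xinfo[OF y True]
        have gy: "g (idx (\<phi> y)) < n" using Y unfolding g_def by auto
        have "u!(g (idx (\<phi> x))) = u!(g (idx (\<phi> y)))" using e \<open>\<phi> x \<in> set u\<close> True unfolding \<psi>_def by simp
        then have "g (idx (\<phi> x)) = g (idx (\<phi> y))" using uinj[OF gx gy] by simp
        then have "idx (\<phi> x) = idx (\<phi> y)" using X Y g_inj unfolding g_def by blast
        then show ?thesis using X Y by metis
      next
        case False
        then have "\<psi> y \<notin> set u" unfolding \<psi>_def by simp
        moreover have "\<psi> x \<in> set u" using gx \<open>\<phi> x \<in> set u\<close> unfolding \<psi>_def by simp
        ultimately show ?thesis using e by simp
      qed
    next
      case False
      then have px: "\<psi> x = \<phi> x" unfolding \<psi>_def by simp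
      show ?thesis
      proof (cases "\<phi> y \<in> set u")
        case True
        note Y = xinfo[OF y True]
        have "g (idx (\<phi> y)) < n" using Y unfolding g_def by auto
        then have "\<psi> y \<in> set u" using True unfolding \<psi>_def by simp
        then show ?thesis using e px False by simp
      next
        case False then show ?thesis using e px unfolding \<psi>_def by simp
      qed
    qed
    then show "x = y" using inj_onD[OF inj] x y by blast
  qed
  have "\<forall>x\<in>S. \<psi> x \<in> V' \<and> \<psi> x \<in> set (pth' x)"
    using mem pth'_V S by blast
  then show ?thesis using injpsi by blast
qed


lemma g2_inj: "(if (i::nat) < f then i else Suc i) = (if j < f then j else Suc j) \<Longrightarrow> i = j"
  by (cases "i < f"; cases "j < f") auto

lemma key2:
  assumes S: "S \<subseteq> P - {eps}"
    and ex: "\<exists>\<psi>. inj_on \<psi> S \<and> (\<forall>x\<in>S. \<psi> x \<in> V' \<and> \<psi> x \<in> set (pth' x))"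
  shows "\<exists>\<phi>. inj_on \<phi> (insert eps S) \<and> (\<forall>x\<in>insert eps S. \<phi> x \<in> V \<and> \<phi> x \<in> set (pth x))"
proof -
  define valid where "valid \<psi> \<longleftrightarrow> inj_on \<psi> S \<and> (\<forall>x\<in>S. \<psi> x \<in> V' \<and> \<psi> x \<in> set (pth' x))" for \<psi>
  define tc where "tc \<psi> = card {x\<in>S. \<psi> x \<notin> set (pth x)}" for \<psi> :: "nat \<Rightarrow> nat"
  have finS: "finite S" using S finP finite_subset by blast
  obtain \<psi>0 where "valid \<psi>0" using ex unfolding valid_def by blast
  then obtain \<psi> where v: "valid \<psi>" and mn: "\<And>\<psi>'. valid \<psi>' \<Longrightarrow> tc \<psi> \<le> tc \<psi>'"
    using ex_has_least_nat[of valid \<psi>0 tc] by blast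
  have injp: "inj_on \<psi> S" and pm: "\<And>x. x \<in> S \<Longrightarrow> \<psi> x \<in> V' \<and> \<psi> x \<in> set (pth' x)"
    using v unfolding valid_def by auto
  have SP: "\<And>x. x \<in> S \<Longrightarrow> x \<in> P \<and> x \<noteq> eps" using S by auto
  have tight: "shift x \<and> \<psi> x = u!(mr x - 1)" if "x \<in> S" "\<psi> x \<notin> set (pth x)" for x
    using K2 pm that by blast
  have psa: "\<psi> x \<noteq> a" if "x \<in> S" for x using pm[OF that] unfolding V'_def by auto
  define T where "T = {j. j < n \<and> (\<exists>x\<in>S. \<psi> x \<notin> set (pth x) \<and> \<psi> x = u!j)}"
  define f where "f = (if T = {} then n - 1 else Min T)"
  have finT: "finite T" unfolding T_def by auto
  have f_lt: "f < n"
  proof (cases "T = {}")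
    case True then show ?thesis unfolding f_def using npos by auto
  next
    case False then have "Min T \<in> T" using Min_in finT by blast
    then show ?thesis unfolding f_def T_def using False by auto
  qed
  have tightge: "f \<le> j" if x: "x \<in> S" "\<psi> x \<notin> set (pth x)" "\<psi> x = u!j" "j < n" for x j
  proof -
    have "j \<in> T" unfolding T_def using x by blast
    then show ?thesis unfolding f_def using Min_le[OF finT] by auto
  qed
  have jlt: "Suc j < n" if x: "x \<in> S" "\<psi> x = u!j" "j < n" for x j
  proof -
    have "j \<noteq> n - 1" using psa[OF x(1)] x(2) unfolding a_def by auto
    then show ?thesis using x(3) by auto
  qed
  have Cl: "u!(Suc j) \<in> set (pth x)"
    if x: "x \<in> S" "\<psi> x = u!j" "j < n" "\<psi> x \<in> set (pth x)" "f \<le> j" for x j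
  proof (rule ccontr)
    assume nS: "u!(Suc j) \<notin> set (pth x)"
    have sj: "Suc j < n" using jlt x by blast
    have Tne: "T \<noteq> {}"
    proof
      assume "T = {}" then have "f = n - 1" unfolding f_def by simp
      then show False using x(5) sj by auto
    qed
    then have "f \<in> T" unfolding f_def using Min_in finT by auto
    then obtain z where z: "z \<in> S" "\<psi> z \<notin> set (pth z)" "\<psi> z = u!f" unfolding T_def by blast
    have "f \<noteq> j"
    proof
      assume "f = j"
      then have "\<psi> z = \<psi> x" using z x by simp
      then have "z = x" using inj_onD[OF injp] z x by blast
      then show False using z x by simp
    qed
    then have fj: "f < j" using x by simp
    then have j0: "0 < j" by simp
    have uj: "u!j \<in> set (pth x)" using x by simp
    have "\<forall>i\<le>j. u!i \<in> set (pth x)"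
      using ARC[OF conjunct1[OF SP[OF x(1)]] j0 sj uj] nS sj by auto
    then have ufx: "u!f \<in> set (pth x)" using fj by simp
    have tz: "shift z" "\<psi> z = u!(mr z - 1)" using tight z by auto
    note D = shiftD[OF tz(1)]
    have "u!f = u!(mr z - 1)" using tz z by simp
    then have "f = mr z - 1" using uinj[of f "mr z - 1"] f_lt D by auto
    then have mrz: "mr z \<le> j" using fj D by auto
    have ujz: "u!j \<in> set (pth z)" using D(4)[OF mrz] x(3) by blast
    have fa: "u!f \<noteq> a" "u!j \<noteq> a" using neq_a fj sj by auto
    have xz: "x \<noteq> z" using z x by auto
    define \<tau> where "\<tau> y = (if y = x then z else if y = z then x else y)" for y
    define \<psi>1 where "\<psi>1 = \<psi> \<circ> \<tau>"
    have p1x: "\<psi>1 x = u!f" and p1z: "\<psi>1 z = u!j" and p1o: "\<And>y. y \<noteq> x \<Longrightarrow> y \<noteq> z \<Longrightarrow> \<psi>1 y = \<psi> y"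
      unfolding \<psi>1_def \<tau>_def using z x xz by auto
    have tS: "\<tau> ` S \<subseteq> S" unfolding \<tau>_def using x z by auto
    have tinj: "inj_on \<tau> S" unfolding \<tau>_def by (rule inj_onI) (auto split: if_splits)
    have inj1: "inj_on \<psi>1 S" unfolding \<psi>1_def using comp_inj_on[OF tinj] injp tS inj_on_subset by blast
    have mem1: "\<psi>1 y \<in> V' \<and> \<psi>1 y \<in> set (pth' y)" if y: "y \<in> S" for y
    proof (cases "y = x")
      case True
      have "u!f \<in> V'" using uV f_lt fa unfolding V'_def by auto
      moreover have "u!f \<in> set (pth' x)" using M1[of x] ufx fa by auto
      ultimately show ?thesis using True p1x by simp
    next
      case False
      show ?thesis
      proof (cases "y = z")
        case True
        have "u!j \<in> V'" using uV x fa unfolding V'_def by auto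
        moreover have "u!j \<in> set (pth' z)" using M1[of z] ujz fa by auto
        ultimately show ?thesis using True p1z by simp
      next
        case False
        then show ?thesis using p1o[OF \<open>y \<noteq> x\<close> False] pm[OF y] by simp
      qed
    qed
    have "valid \<psi>1" unfolding valid_def using inj1 mem1 by blast
    then have le: "tc \<psi> \<le> tc \<psi>1" using mn by blast
    have "{y\<in>S. \<psi>1 y \<notin> set (pth y)} = {y\<in>S. \<psi> y \<notin> set (pth y)} - {z}"
    proof (rule set_eqI)
      fix y
      show "y \<in> {y\<in>S. \<psi>1 y \<notin> set (pth y)} \<longleftrightarrow> y \<in> {y\<in>S. \<psi> y \<notin> set (pth y)} - {z}"
      proof (cases "y = x")
        case True then show ?thesis using p1x ufx x xz by auto
      next
        case False
        show ?thesis
        proof (cases "y = z")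
          case True then show ?thesis using p1z ujz by auto
        next
          case False then show ?thesis using p1o[OF \<open>y \<noteq> x\<close> False] by auto
        qed
      qed
    qed
    moreover have "z \<in> {y\<in>S. \<psi> y \<notin> set (pth y)}" using z by auto
    moreover have "finite {y\<in>S. \<psi> y \<notin> set (pth y)}" using finS by auto
    ultimately have "tc \<psi>1 < tc \<psi>" unfolding tc_def by (metis (no_types, lifting) card_Diff1_less)
    then show False using le by simp
  qed
  define h where "h j = (if j < f then j else Suc j)" for j
  define \<phi> where "\<phi> x = (if x = eps then u!f else if \<psi> x \<in> set u then u!(h (idx (\<psi> x))) else \<psi> x)" for x
  have xinfo: "idx (\<psi> x) < n \<and> u!(idx (\<psi> x)) = \<psi> x \<and> Suc (idx (\<psi> x)) < n" if x: "x \<in> S" and xu: "\<psi> x \<in> set u" for x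
  proof -
    have "idx (\<psi> x) < n \<and> u!(idx (\<psi> x)) = \<psi> x" using idx_in[OF xu] .
    moreover have "Suc (idx (\<psi> x)) < n" using jlt[OF x, of "idx (\<psi> x)"] calculation by simp
    ultimately show ?thesis by blast
  qed
  have hlt: "h (idx (\<psi> x)) < n" if x: "x \<in> S" and xu: "\<psi> x \<in> set u" for x
    using xinfo[OF x xu] f_lt unfolding h_def by auto
  have memx: "\<phi> x \<in> V \<and> \<phi> x \<in> set (pth x)" if x: "x \<in> S" for x
  proof -
    have xe: "x \<noteq> eps" using SP x by auto
    show ?thesis
    proof (cases "\<psi> x \<in> set u")
      case False
      have "\<psi> x \<in> set (pth x)"
      proof (rule ccontr)
        assume "\<psi> x \<notin> set (pth x)"
        then have "\<psi> x = u!(mr x - 1)" "shift x" using tight x by auto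
        moreover have "mr x - 1 < n" using shiftD(2)[of x] calculation npos by linarith
        ultimately have "\<psi> x \<in> set u" by simp
        then show False using False by simp
      qed
      moreover have "\<psi> x \<in> V" using pm[OF x] unfolding V'_def by auto
      ultimately show ?thesis using False xe unfolding \<phi>_def by simp
    next
      case True
      define j where "j = idx (\<psi> x)"
      have j: "j < n" "u!j = \<psi> x" "Suc j < n" using xinfo[OF x True] unfolding j_def by auto
      have "u!(h j) \<in> set (pth x)"
      proof (cases "j < f")
        case True
        have "\<psi> x \<in> set (pth x)"
        proof (rule ccontr)
          assume "\<psi> x \<notin> set (pth x)"
          then have "f \<le> j" using tightge x j by metis
          then show False using True by simp
        qed
        then show ?thesis using True j unfolding h_def by simp
      next
        case False
        show ?thesis
        proof (cases "\<psi> x \<in> set (pth x)")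
          case True
          then show ?thesis using Cl[OF x j(2)[symmetric] j(1) True] False unfolding h_def by simp
        next
          case nt: False
          then have sh: "shift x" "\<psi> x = u!(mr x - 1)" using tight x by auto
          note D = shiftD[OF sh(1)]
          have "j = mr x - 1" using uinj[of j "mr x - 1"] j sh D by auto
          then have "Suc j = mr x" using D by auto
          then show ?thesis using D(4)[of "Suc j"] j False unfolding h_def by simp
        qed
      qed
      moreover have "h j < n" using j f_lt unfolding h_def by auto
      ultimately show ?thesis using uV True xe unfolding \<phi>_def j_def by simp
    qed
  qed
  have meme: "\<phi> eps \<in> V \<and> \<phi> eps \<in> set (pth eps)" unfolding \<phi>_def using uV f_lt by simp
  have ne: "\<phi> x \<noteq> \<phi> eps" if x: "x \<in> S" for x
  proof -
    have xe: "x \<noteq> eps" using SP x by auto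
    show ?thesis
    proof (cases "\<psi> x \<in> set u")
      case False
      then show ?thesis using xe f_lt unfolding \<phi>_def by auto
    next
      case True
      have "h (idx (\<psi> x)) \<noteq> f" unfolding h_def by auto
      then show ?thesis using uinj[OF hlt[OF x True] f_lt] True xe unfolding \<phi>_def by simp
    qed
  qed
  have injS: "\<phi> x = \<phi> y \<Longrightarrow> x = y" if x: "x \<in> S" and y: "y \<in> S" for x y
  proof -
    assume e: "\<phi> x = \<phi> y"
    have xe: "x \<noteq> eps" "y \<noteq> eps" using SP x y by auto
    have "\<psi> x = \<psi> y"
    proof (cases "\<psi> x \<in> set u")
      case True
      note X = xinfo[OF x True]
      show ?thesis
      proof (cases "\<psi> y \<in> set u")
        case True
        note Y = xinfo[OF y True]
        have "u!(h (idx (\<psi> x))) = u!(h (idx (\<psi> y)))" using e \<open>\<psi> x \<in> set u\<close> True xe unfolding \<phi>_def by simp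
        then have "h (idx (\<psi> x)) = h (idx (\<psi> y))" using uinj[OF hlt[OF x \<open>\<psi> x \<in> set u\<close>] hlt[OF y True]] by simp
        then have "idx (\<psi> x) = idx (\<psi> y)" using g2_inj unfolding h_def by blast
        then show ?thesis using X Y by metis
      next
        case False
        then have "\<phi> y \<notin> set u" using xe unfolding \<phi>_def by simp
        moreover have "\<phi> x \<in> set u" using hlt[OF x \<open>\<psi> x \<in> set u\<close>] \<open>\<psi> x \<in> set u\<close> xe unfolding \<phi>_def by simp
        ultimately show ?thesis using e by simp
      qed
    next
      case False
      then have px: "\<phi> x = \<psi> x" using xe unfolding \<phi>_def by simp
      show ?thesis
      proof (cases "\<psi> y \<in> set u")
        case True
        then have "\<phi> y \<in> set u" using hlt[OF y True] xe unfolding \<phi>_def by simp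
        then show ?thesis using e px False by simp
      next
        case False then show ?thesis using e px xe unfolding \<phi>_def by simp
      qed
    qed
    then show "x = y" using inj_onD[OF injp] x y by blast
  qed
  have "inj_on \<phi> (insert eps S)"
  proof (rule inj_onI)
    fix x y assume x: "x \<in> insert eps S" and y: "y \<in> insert eps S" and e: "\<phi> x = \<phi> y"
    show "x = y"
    proof (cases "x = eps")
      case True
      show ?thesis
      proof (cases "y = eps")
        case False then have "y \<in> S" using y by simp
        then show ?thesis using ne[of y] e True by simp
      qed (use True in simp)
    next
      case False
      then have xS: "x \<in> S" using x by simp
      show ?thesis
      proof (cases "y = eps")
        case True then show ?thesis using ne[OF xS] e by simp
      next
        case False then show ?thesis using injS[OF xS _ e] y by simp
      qed
    qed
  qed
  moreover have "\<forall>x\<in>insert eps S. \<phi> x \<in> V \<and> \<phi> x \<in> set (pth x)" using memx meme by blast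
  ultimately show ?thesis by blast
qed

end



context pcx begin

lemma Adj'_sym: "Adj' v w \<Longrightarrow> Adj' w v" unfolding Adj'_def using adj_sym by blast
lemma Adj'_V: "Adj' v w \<Longrightarrow> v \<in> V' \<and> w \<in> V' \<and> v \<noteq> w" unfolding Adj'_def by blast
lemma Adj'_I: "v \<in> V \<Longrightarrow> w \<in> V \<Longrightarrow> v \<noteq> a \<Longrightarrow> w \<noteq> a \<Longrightarrow> Adj v w \<Longrightarrow> Adj' v w"
  unfolding Adj'_def V'_def using adjV by blast

lemma sg': "simple_graph V' Adj'"
  unfolding simple_graph_def using Adj'_sym Adj'_V finV unfolding V'_def by blast

lemma b_V': "2 \<le> n \<Longrightarrow> b \<in> V'" unfolding V'_def using uV a_ne_b b_idx by auto

lemma n1_not_int: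
  assumes "n = 1" "y \<in> P" "a \<in> intr (pth y)"
  shows False
proof -
  have "u = [u!0]" using assms(1) by (cases u) auto
  then have su: "set u = {a}" unfolding a_def using assms(1) by (metis diff_self_eq_0 list.set(1) list.set(2))
  have "hd (pth y) \<in> set u \<or> last (pth y) \<in> set u" using cond2[OF assms(2) epsP assms(3)] a_in by blast
  then show False using su assms(3) hd_last_not_intr[OF pdist[OF assms(2)]] by auto
qed

lemma sig_inj:
  assumes sh: "shift z"
  shows "inj_on (sig z) (set (pth z))"
proof (rule inj_onI)
  note D = shiftD[OF sh]
  fix v w assume v: "v \<in> set (pth z)" and w: "w \<in> set (pth z)" and e: "sig z v = sig z w"
  have side: False if r: "inrun z v1" "\<not> inrun z w1" "w1 \<in> set (pth z)" "sig z v1 = sig z w1" for v1 w1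
  proof -
    obtain i where i: "mr z \<le> i" "i < n" "v1 = u!i" using r(1) unfolding inrun_def by blast
    have "w1 = u!(i-1)" using r(2,4) sig_nrun sig_run i by metis
    moreover have "\<not> mr z \<le> i - 1"
    proof
      assume "mr z \<le> i - 1"
      then have "inrun z w1" unfolding inrun_def using calculation i by (intro exI[of _ "i-1"]) auto
      then show False using r(2) by simp
    qed
    moreover have "i = mr z" using calculation(2) i D(1) by linarith
    ultimately have "w1 = u!(mr z - 1)" by simp
    then show False using r(3) D(3) by simp
  qed
  show "v = w"
  proof (cases "inrun z v")
    case True
    show ?thesis
    proof (cases "inrun z w")
      case True
      obtain i where i: "mr z \<le> i" "i < n" "v = u!i" using \<open>inrun z v\<close> unfolding inrun_def by blast
      obtain j where j: "mr z \<le> j" "j < n" "w = u!j" using True unfolding inrun_def by blast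
      have "u!(i-1) = u!(j-1)" using e sig_run i j by metis
      then have "i - 1 = j - 1" using uinj i j by auto
      then have "i = j" using i j D(1) by auto
      then show ?thesis using i j by simp
    next
      case False then show ?thesis using side[OF \<open>inrun z v\<close> False w e] by blast
    qed
  next
    case False
    show ?thesis
    proof (cases "inrun z w")
      case True then show ?thesis using side[OF True False v e[symmetric]] by blast
    next
      case False then show ?thesis using e sig_nrun \<open>\<not> inrun z v\<close> by metis
    qed
  qed
qed

lemma pth'_dist: "z \<in> P \<Longrightarrow> distinct (pth' z)"
  unfolding pth'_def using pdist sig_inj distinct_map unfolding shift_def by auto

lemma R2:
  assumes sh: "shift z" and i: "mr z \<le> i" "i < n" and w: "w \<in> set (pth z)" "\<not> inrun z w" and ad: "Adj (u!i) w"
  shows "i = n - 1"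
proof (rule ccontr)
  note D = shiftD[OF sh]
  assume "i \<noteq> n - 1"
  then have si: "Suc i < n" "0 < i" using i D by auto
  then have "w = u!(i-1) \<or> w = u!Suc i" using thr_nb ad by blast
  then show False
  proof
    assume "w = u!Suc i" then show False using w(2) i si unfolding inrun_def by auto
  next
    assume wi: "w = u!(i-1)"
    show False
    proof (cases "mr z \<le> i - 1")
      case True
      then have "inrun z w" unfolding inrun_def using wi i by (intro exI[of _ "i-1"]) auto
      then show False using w(2) by simp
    next
      case False then have "i = mr z" using i by auto
      then show False using wi w(1) D(3) by simp
    qed
  qed
qed

lemma R3:
  assumes sh: "shift z" and i: "mr z \<le> i" "i < n" and j: "mr z \<le> j" "j < n" and ad: "Adj (u!i) (u!j)"
  shows "i = Suc j \<or> j = Suc i"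
proof -
  note D = shiftD[OF sh]
  show ?thesis
  proof (cases "Suc i < n")
    case True
    then have "u!j = u!(i-1) \<or> u!j = u!Suc i" using thr_nb[of i] ad i D by auto
    then have "j = i - 1 \<or> j = Suc i" using uinj i j True by auto
    then show ?thesis using i D by auto
  next
    case False
    then have iN: "i = n - 1" using i by auto
    have "j \<noteq> i" using ad adjV by auto
    then have sj: "Suc j < n" "0 < j" using iN j D by auto
    have "Adj (u!j) (u!i)" using ad adj_sym by blast
    then have "u!i = u!(j-1) \<or> u!i = u!Suc j" using thr_nb sj by blast
    then have "i = j - 1 \<or> i = Suc j" using uinj i j sj by auto
    then show ?thesis using iN sj by auto
  qed
qed

lemma R4:
  assumes sh: "shift z" and z: "z \<in> P" and i: "mr z \<le> i" "Suc i < n"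
  shows "lnb (pth z) (u!i) (u!Suc i)"
proof -
  note D = shiftD[OF sh]
  have az: "a \<in> set (pth z)" using sh unfolding shift_def by simp
  have aout: "a \<notin> {u!k |k. mr z \<le> k \<and> k \<le> i}"
  proof
    assume "a \<in> {u!k |k. mr z \<le> k \<and> k \<le> i}"
    then obtain k where "k \<le> i" "a = u!k" by blast
    moreover have "k < n - 1" using calculation i by auto
    ultimately show False using neq_a[of k] by auto
  qed
  have inZ: "\<forall>k. mr z \<le> k \<and> k \<le> i \<longrightarrow> u!k \<in> set (pth z)" using D(4) i by auto
  have "(u!(mr z-1) \<in> set (pth z) \<and> lnb (pth z) (u!(mr z-1)) (u!mr z)) \<or> (u!Suc i \<in> set (pth z) \<and> lnb (pth z) (u!i) (u!Suc i))"
    using SEG[OF z D(1) i(1) i(2) inZ az aout] .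
  then show ?thesis using D(3) by blast
qed

lemma R5:
  assumes sh: "shift z" and z: "z \<in> P" and i: "mr z < i" "Suc i < n"
  shows "u!i \<in> intr (pth z)"
proof -
  have si: "Suc (i-1) = i" using i by auto
  have "lnb (pth z) (u!(i-1)) (u!Suc (i-1))" using R4[OF sh z, of "i-1"] i si by auto
  then have l1: "lnb (pth z) (u!i) (u!(i-1))" using si lnb_sym by metis
  have l2: "lnb (pth z) (u!i) (u!Suc i)" using R4[OF sh z, of i] i by auto
  have "u!(i-1) \<noteq> u!Suc i" using uinj i by auto
  then show ?thesis unfolding intr_def using l1 l2 by blast
qed

lemma R6:
  assumes sh: "shift z" and z: "z \<in> P"
  shows "u!(mr z) \<notin> intr (pth z)"
proof
  note D = shiftD[OF sh]
  assume I: "u!(mr z) \<in> intr (pth z)"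
  show False
  proof (cases "Suc (mr z) < n")
    case True
    have one: "x = u!Suc (mr z)" if "lnb (pth z) (u!mr z) x" for x
    proof -
      have "Adj (u!mr z) x" using padj[OF z that] .
      then have "x = u!(mr z - 1) \<or> x = u!Suc (mr z)" using thr_nb[of "mr z"] True D by auto
      moreover have "x \<in> set (pth z)" using lnb_set that by metis
      ultimately show ?thesis using D(3) by auto
    qed
    obtain x y where "x \<noteq> y" "lnb (pth z) (u!mr z) x" "lnb (pth z) (u!mr z) y" using I unfolding intr_def by blast
    then show False using one by blast
  next
    case False
    then have m: "mr z = n - 1" using D by auto
    then have "a \<in> intr (pth z)" using I unfolding a_def by simp
    then have "lnb (pth z) a b" using nbr_int[OF z] ab_adj[OF D(5)] adj_sym by blast
    then have "b \<in> set (pth z)" using lnb_set by metis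
    moreover have "b = u!(mr z - 1)" using m unfolding b_def by (simp add: numeral_2_eq_2)
    ultimately show False using D(3) by simp
  qed
qed

lemma R7:
  assumes sh: "shift z" and w: "w \<in> set (pth z)" "sig z w = b"
  shows "w = a"
proof -
  note D = shiftD[OF sh]
  show ?thesis
  proof (cases "inrun z w")
    case True
    then obtain i where i: "mr z \<le> i" "i < n" "w = u!i" unfolding inrun_def by blast
    then have "u!(i-1) = u!(n-2)" using w sig_run unfolding b_def by metis
    then have "i - 1 = n - 2" using uinj i D by auto
    then have "i = n - 1" using i D by auto
    then show ?thesis using i unfolding a_def by simp
  next
    case False
    then have wb: "w = b" using w sig_nrun by metis
    have "\<not> mr z \<le> n - 2" using False wb b_idx[OF D(5)] unfolding inrun_def by auto
    then have "mr z = n - 1" using D by auto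
    then have "b = u!(mr z - 1)" unfolding b_def by (simp add: numeral_2_eq_2)
    then show ?thesis using w(1) wb D(3) by simp
  qed
qed

lemma bnr:
  assumes sh: "shift z" and bz: "b \<in> set (pth z)"
  shows "inrun z b" "mr z \<le> n - 2"
proof -
  note D = shiftD[OF sh]
  show "mr z \<le> n - 2"
  proof (rule ccontr)
    assume "\<not> mr z \<le> n - 2"
    then have "mr z = n - 1" using D by auto
    then have "b = u!(mr z - 1)" unfolding b_def by (simp add: numeral_2_eq_2)
    then show False using bz D(3) by simp
  qed
  then show "inrun z b" unfolding inrun_def b_def using D by auto
qed

lemma sig_a: "shift z \<Longrightarrow> sig z a = b"
  using sig_run[of z "n-1"] shiftD[of z] unfolding a_def b_def by (simp add: numeral_2_eq_2)

end



context pcx begin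

lemma a_V: "a \<in> V" unfolding a_def using uV npos by simp

lemma new_chain:
  assumes z: "z \<in> P" and l: "lnb (pth' z) v w"
  shows "Adj' v w"
proof (cases "a \<in> set (pth z)")
  case False
  then have l0: "lnb (pth z) v w" using l unfolding pth'_def by simp
  have "v \<noteq> a" "w \<noteq> a" using lnb_set[OF l0] False by auto
  then show ?thesis using Adj'_I padj[OF z l0] adjV by blast
next
  case az: True
  show ?thesis
  proof (cases "set u \<subseteq> set (pth z)")
    case True
    then have "lnb (filter (\<lambda>x. x \<noteq> a) (pth z)) v w" using l az unfolding pth'_def by simp
    then have "(lnb (pth z) v w \<and> v \<noteq> a \<and> w \<noteq> a) \<or> (lnb (pth z) v a \<and> lnb (pth z) a w \<and> v \<noteq> w)"
      using lnb_filter[OF pdist[OF z] az] by blast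
    then show ?thesis
    proof
      assume "lnb (pth z) v w \<and> v \<noteq> a \<and> w \<noteq> a"
      then show ?thesis using Adj'_I padj[OF z] adjV by blast
    next
      assume h: "lnb (pth z) v a \<and> lnb (pth z) a w \<and> v \<noteq> w"
      have hav: "lnb (pth z) a v" using h lnb_sym[of "pth z" v a] by simp
      have aI: "a \<in> intr (pth z)" unfolding intr_def using h hav by blast
      have n2: "2 \<le> n"
      proof (rule ccontr)
        assume "\<not> 2 \<le> n" then have "n = 1" using npos by linarith
        then show False using n1_not_int z aI by blast
      qed
      have lab: "lnb (pth z) a b" using nbr_int[OF z aI] ab_adj[OF n2] adj_sym by blast
      then have bvw: "b = v \<or> b = w" using lnb_three[OF pdist[OF z] hav, of w b] h lab by blast
      have va: "v \<noteq> a" "w \<noteq> a" using h hav lnb_neq[OF pdist[OF z]] by blast+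
      have vz: "v \<in> set (pth z)" "w \<in> set (pth z)" using h lnb_set[of "pth z" v a] lnb_set[of "pth z" a w] by auto
      have vV: "v \<in> V'" "w \<in> V'" using vz va pset[OF z] unfolding V'_def by blast+
      have aw: "Adj a w" "Adj a v" using padj[OF z] h hav by blast+
      show ?thesis
      proof (cases "b = v")
        case True
        then show ?thesis unfolding Adj'_def using vV h n2 aw by blast
      next
        case False
        then have "b = w" using bvw by simp
        then show ?thesis unfolding Adj'_def using vV h n2 aw by blast
      qed
    qed
  next
    case False
    then have sh: "shift z" using az unfolding shift_def by simp
    note D = shiftD[OF sh]
    have "lnb (map (sig z) (pth z)) v w" using l az False unfolding pth'_def by simp
    then obtain v0 w0 where vw: "lnb (pth z) v0 w0" "sig z v0 = v" "sig z w0 = w" unfolding lnb_map by blast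
    have ad: "Adj v0 w0" using padj[OF z vw(1)] .
    have inz: "v0 \<in> set (pth z)" "w0 \<in> set (pth z)" using lnb_set vw(1) by metis+
    have vV: "v \<in> V'" "w \<in> V'" using pth'_V[OF z] inz vw(2,3) az False unfolding pth'_def by auto
    have mixed: "Adj' (sig z p) (sig z q)" if r: "inrun z p" "\<not> inrun z q" "q \<in> set (pth z)" "Adj p q"
      "sig z p \<in> V'" "sig z q \<in> V'" for p q
    proof -
      obtain i where i: "mr z \<le> i" "i < n" "p = u!i" using r(1) unfolding inrun_def by blast
      have "i = n - 1" using R2[OF sh i(1,2) r(3,2)] r(4) i(3) by simp
      then have pa: "p = a" using i unfolding a_def by simp
      have sp: "sig z p = b" using pa sig_a[OF sh] by simp
      have sq: "sig z q = q" using sig_nrun r(2) by simp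
      have "q \<noteq> b" using R7[OF sh r(3)] sq pa r(1,2) by auto
      then show ?thesis unfolding Adj'_def using sp sq r(4,5,6) pa D(5) by auto
    qed
    show ?thesis
    proof (cases "inrun z v0")
      case True
      show ?thesis
      proof (cases "inrun z w0")
        case True
        obtain i where i: "mr z \<le> i" "i < n" "v0 = u!i" using \<open>inrun z v0\<close> unfolding inrun_def by blast
        obtain j where j: "mr z \<le> j" "j < n" "w0 = u!j" using True unfolding inrun_def by blast
        have ij: "i = Suc j \<or> j = Suc i" using R3[OF sh i(1,2) j(1,2)] ad i j by simp
        have v: "v = u!(i-1)" and w: "w = u!(j-1)" using vw sig_run i j by auto
        have "Adj v w"
        proof (cases "i = Suc j")
          case True
          then have "Adj (u!(j-1)) (u!Suc (j-1))" using thr_adj[of "j-1"] i j D(1) by auto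
          moreover have "Suc (j-1) = j" using j D(1) by auto
          ultimately show ?thesis using v w True adj_sym by auto
        next
          case False
          then have ji: "j = Suc i" using ij by simp
          then have "Adj (u!(i-1)) (u!Suc (i-1))" using thr_adj[of "i-1"] i j D(1) by auto
          moreover have "Suc (i-1) = i" using i D(1) by auto
          ultimately show ?thesis using v w ji by auto
        qed
        then show ?thesis unfolding Adj'_def using vV adjV by blast
      next
        case False
        then show ?thesis using mixed[OF \<open>inrun z v0\<close> False inz(2) ad] vw vV by simp
      qed
    next
      case False
      show ?thesis
      proof (cases "inrun z w0")
        case True
        have "Adj' (sig z w0) (sig z v0)" using mixed[OF True False inz(1) adj_sym[OF ad]] vV vw by simp
        then show ?thesis using vw Adj'_sym by simp
      next
        case False
        have "v = v0" "w = w0" using sig_nrun vw \<open>\<not> inrun z v0\<close> False by auto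
        then show ?thesis unfolding Adj'_def using vV ad adjV by auto
      qed
    qed
  qed
qed

lemma new_path: "z \<in> P \<Longrightarrow> is_path V' Adj' (pth' z)"
  unfolding is_path_def using pth'_dist pth'_V new_chain chain_lnb[of Adj' "pth' z", OF Adj'_sym] by blast

end



context pcx begin

lemma b_eq_a_n1: "n = 1 \<Longrightarrow> b = a" unfolding a_def b_def by simp

lemma new_nbr:
  assumes z: "z \<in> P" and vI: "v \<in> intr (pth' z)" and ad: "Adj' v x"
  shows "lnb (pth' z) v x"
proof -
  have xV: "x \<in> V'" "v \<noteq> x" "v \<in> V'" using Adj'_V[OF ad] by auto
  have xa: "x \<noteq> a" "v \<noteq> a" using xV unfolding V'_def by auto
  show ?thesis
  proof (cases "a \<in> set (pth z)")
    case False
    have pe: "pth' z = pth z" using False unfolding pth'_def by simp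
    have vI0: "v \<in> intr (pth z)" using vI pe by simp
    have na: "\<not> Adj v a"
    proof
      assume "Adj v a"
      then have "lnb (pth z) v a" using nbr_int[OF z vI0] by blast
      then show False using lnb_set False by metis
    qed
    have vb: "2 \<le> n \<Longrightarrow> v \<noteq> b" using na ab_adj by blast
    have "Adj v x" using ad vb na adj_sym unfolding Adj'_def by blast
    then show ?thesis using nbr_int[OF z vI0] pe by simp
  next
    case az: True
    show ?thesis
    proof (cases "set u \<subseteq> set (pth z)")
      case True
      have pe: "pth' z = filter (\<lambda>x. x \<noteq> a) (pth z)" using az True unfolding pth'_def by simp
      have vI0: "v \<in> intr (pth z)" and va: "lnb (pth z) v a \<Longrightarrow> a \<in> intr (pth z)"
        using intr_filter[OF pdist[OF z] az, of v] vI pe by auto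
      have LF: "lnb (pth' z) v x \<longleftrightarrow> (lnb (pth z) v x \<and> v \<noteq> a \<and> x \<noteq> a) \<or> (lnb (pth z) v a \<and> lnb (pth z) a x \<and> v \<noteq> x)"
        using lnb_filter[OF pdist[OF z] az] pe by simp
      consider "Adj v x" | "2 \<le> n" "v = b" "Adj a x" | "2 \<le> n" "x = b" "Adj a v"
        using ad unfolding Adj'_def by blast
      then show ?thesis
      proof cases
        case 1 then show ?thesis using LF nbr_int[OF z vI0] xa by blast
      next
        case 2
        have "lnb (pth z) v a" using nbr_int[OF z vI0] ab_adj[OF 2(1)] 2(2) by blast
        moreover then have "lnb (pth z) a x" using nbr_int[OF z va] 2(3) by blast
        ultimately show ?thesis using LF xV by blast
      next
        case 3
        have "lnb (pth z) v a" using nbr_int[OF z vI0] 3(3) adj_sym by blast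
        moreover then have "lnb (pth z) a x" using nbr_int[OF z va] ab_adj[OF 3(1)] adj_sym 3(2) by blast
        ultimately show ?thesis using LF xV by blast
      qed
    next
      case False
      then have sh: "shift z" using az unfolding shift_def by simp
      note D = shiftD[OF sh]
      have pe: "pth' z = map (sig z) (pth z)" using az False unfolding pth'_def by simp
      have "v \<in> sig z ` intr (pth z)" using vI pe intr_map[OF sig_inj[OF sh]] by simp
      then obtain w where w: "w \<in> intr (pth z)" "v = sig z w" by blast
      have wz: "w \<in> set (pth z)" using w(1) intr_set[of "pth z"] by auto
      have goal: "lnb (pth' z) v x" if "lnb (pth z) w x0" "sig z x0 = x" for x0
        unfolding pe lnb_map using that w(2) by blast
      have NB: "Adj w y \<longleftrightarrow> lnb (pth z) w y" for y using nbr_int[OF z w(1)] .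
      show ?thesis
      proof (cases "inrun z w")
        case False
        have vw: "v = w" using w sig_nrun False by simp
        have wb: "w \<noteq> b" using bnr(1)[OF sh] wz False by blast
        consider "Adj w x" | "x = b" "Adj a w" "2 \<le> n"
          using ad wb vw unfolding Adj'_def by blast
        then show ?thesis
        proof cases
          case 1
          have xz: "x \<in> set (pth z)" using 1 NB lnb_set by metis
          have "\<not> inrun z x"
          proof
            assume "inrun z x"
            then obtain i where i: "mr z \<le> i" "i < n" "x = u!i" unfolding inrun_def by blast
            have "i = n - 1" using R2[OF sh i(1,2) wz False] 1 adj_sym i(3) by blast
            then show False using xa i unfolding a_def by simp
          qed
          then have "sig z x = x" using sig_nrun by simp
          then show ?thesis using goal[of x] 1 NB by blast
        next
          case 2
          have "lnb (pth z) w a" using NB 2 adj_sym by blast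
          then show ?thesis using goal[of a] sig_a[OF sh] 2 by blast
        qed
      next
        case True
        then obtain i where i: "mr z \<le> i" "i < n" "w = u!i" unfolding inrun_def by blast
        have im: "i \<noteq> mr z" using R6[OF sh z] w i by auto
        show ?thesis
        proof (cases "i = n - 1")
          case True
          then have wa: "w = a" using i unfolding a_def by simp
          then have vb: "v = b" using w sig_a[OF sh] by simp
          have m2: "mr z \<le> n - 2" using im True i by auto
          have n3: "3 \<le> n" using m2 D(1) by auto
          consider "Adj b x" | "Adj a x" | "x = b"
            using ad vb unfolding Adj'_def by blast
          then show ?thesis
          proof cases
            case 1
            have "x = u!(n-2-1) \<or> x = u!Suc (n-2)" using thr_nb[of "n-2" x] 1 n3 unfolding b_def by auto
            moreover have "u!Suc (n-2) = a" unfolding a_def using n3 by (simp add: Suc_diff_Suc numeral_2_eq_2)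
            ultimately have x3: "x = u!(n-2-1)" using xa by auto
            have "lnb (pth z) a b" using NB wa ab_adj[of] n3 adj_sym by auto
            moreover have "sig z b = u!(n-2-1)" using sig_run[of z "n-2"] m2 n3 unfolding b_def by auto
            ultimately show ?thesis using goal[of b] wa x3 by blast
          next
            case 2
            have lx: "lnb (pth z) a x" using NB wa 2 by blast
            have xz: "x \<in> set (pth z)" using lx lnb_set by metis
            have "\<not> inrun z x"
            proof
              assume "inrun z x"
              then obtain k where k: "mr z \<le> k" "k < n" "x = u!k" unfolding inrun_def by blast
              have "n - 1 = Suc k \<or> k = Suc (n - 1)" using R3[OF sh _ _ k(1,2), of "n-1"] D 2 k(3) unfolding a_def by auto
              then have "k = n - 2" using k by auto
              then show False using xV vb k unfolding b_def by auto
            qed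
            then have "sig z x = x" using sig_nrun by simp
            then show ?thesis using goal[of x] lx wa by blast
          next
            case 3 then show ?thesis using xV vb by simp
          qed
        next
          case False
          then have i2: "Suc i < n" "mr z < i" using i im by auto
          have v: "v = u!(i-1)" using w i sig_run by simp
          have si: "Suc (i-1) = i" "0 < i - 1" "Suc (i - 1) < n" using i2 D(1) by auto
          have nva: "\<not> Adj a v"
          proof
            assume "Adj a v"
            then have "Adj (u!(i-1)) a" using v adj_sym by simp
            then have "a = u!(i-1-1) \<or> a = u!Suc (i-1)" using thr_nb[OF si(2) si(3), of a] by simp
            moreover have "i - 1 - 1 < n - 1" "Suc (i-1) < n - 1" using si i2 by auto
            ultimately show False using neq_a[of "i-1-1"] neq_a[of "Suc (i-1)"] by argo
          qed
          have nvb: "v \<noteq> b"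
          proof
            assume "v = b"
            then have "i - 1 = n - 2" using v uinj[of "i-1" "n-2"] i2 unfolding b_def by auto
            then show False using i2 by auto
          qed
          have "Adj v x" using ad nva nvb unfolding Adj'_def by blast
          then have "x = u!(i-1-1) \<or> x = u!Suc (i-1)" using thr_nb[OF si(2) si(3), of x] v by simp
          then show ?thesis
          proof
            assume x: "x = u!(i-1-1)"
            have "lnb (pth z) w (u!(i-1))" using NB thr_adj[of "i-1"] adj_sym si i by auto
            moreover have "sig z (u!(i-1)) = x" using sig_run[of z "i-1"] x i2 i by auto
            ultimately show ?thesis using goal by blast
          next
            assume x: "x = u!Suc (i-1)"
            have "lnb (pth z) w (u!Suc i)" using NB thr_adj[of i] i2 i by auto
            moreover have "sig z (u!Suc i) = x" using sig_run[of z "Suc i"] x i2 i si by auto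
            ultimately show ?thesis using goal by blast
          qed
        qed
      qed
    qed
  qed
qed

end



context pcx begin

lemma su1: "n = 1 \<Longrightarrow> set u = {a}"
proof -
  assume n1: "n = 1"
  have "u = [u!0]" using n1 by (cases u) auto
  then show "set u = {a}" unfolding a_def using n1 by (metis diff_self_eq_0 list.set(1) list.set(2))
qed

lemma H1:
  assumes z: "z \<in> P" and az: "a \<in> set (pth z)" and n1: "n = 1" and ne: "pth' z \<noteq> []"
  shows "\<exists>c. lnb (pth z) a c \<and> c \<noteq> a \<and> c \<in> set (pth' z)"
proof -
  have full: "set u \<subseteq> set (pth z)" using su1[OF n1] az by simp
  have S: "set (pth' z) = set (pth z) - {a}" using set_pth'_2[OF az full] .
  obtain c0 where c0: "c0 \<in> set (pth' z)" using ne by (meson list.set_sel(1))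
  then have c0': "c0 \<in> set (pth z)" "c0 \<notin> {a}" using S by auto
  obtain x y where xy: "lnb (pth z) x y" "x \<in> {a}" "y \<notin> {a}" using crossing[OF az _ c0'] by blast
  then have "lnb (pth z) a y" "y \<noteq> a" by auto
  moreover have "y \<in> set (pth' z)" using S xy lnb_set by fastforce
  ultimately show ?thesis by blast
qed

lemma new_refute:
  assumes y: "y \<in> P" and z: "z \<in> P" and ne: "pth' z \<noteq> []"
  shows "\<not> set (pth' z) \<subseteq> intr (pth' y)"
proof
  assume sub: "set (pth' z) \<subseteq> intr (pth' y)"
  have Zne: "pth z \<noteq> []"
  proof
    assume "pth z = []"
    then have "pth' z = []" unfolding pth'_def by simp
    then show False using ne by simp
  qed
  have M1z: "set (pth z) - {a} \<subseteq> set (pth' z)" using M1 .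
  show False
  proof (cases "a \<in> set (pth y)")
    case False
    have pe: "pth' y = pth y" using False unfolding pth'_def by simp
    show False
    proof (cases "a \<in> set (pth z)")
      case az: True
      show False
      proof (cases "2 \<le> n")
        case True
        have "b \<in> intr (pth y)" using M2[OF az True] sub pe by auto
        then have "lnb (pth y) b a" using nbr_int[OF y] ab_adj[OF True] by blast
        then show False using False lnb_set by metis
      next
        case nt: False
        then have n1: "n = 1" using npos by linarith
        obtain c where c: "lnb (pth z) a c" "c \<noteq> a" "c \<in> set (pth' z)" using H1[OF z az n1 ne] by blast
        have "c \<in> intr (pth y)" using c sub pe by auto
        moreover have "Adj c a" using padj[OF z c(1)] adj_sym by blast
        ultimately have "lnb (pth y) c a" using nbr_int[OF y] by blast
        then show False using False lnb_set by metis
      qed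
    next
      case nz: False
      then have "set (pth z) \<subseteq> intr (pth y)" using M1z sub pe by auto
      then show False using O3[OF y z Zne] by blast
    qed
  next
    case ay: True
    show False
    proof (cases "set u \<subseteq> set (pth y)")
      case True
      have pe: "pth' y = filter (\<lambda>x. x \<noteq> a) (pth y)" using ay True unfolding pth'_def by simp
      have IF: "v \<in> intr (pth y) \<and> (lnb (pth y) v a \<longrightarrow> a \<in> intr (pth y))" if "v \<in> set (pth' z)" for v
        using intr_filter[OF pdist[OF y] ay, of v] sub that pe by auto
      have aI: "a \<in> intr (pth y)" if az: "a \<in> set (pth z)"
      proof (cases "2 \<le> n")
        case True
        have "b \<in> set (pth' z)" using M2[OF az True] .
        note B = IF[OF this]
        then have "lnb (pth y) b a" using nbr_int[OF y] ab_adj[OF True] by blast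
        then show ?thesis using B by blast
      next
        case False
        then have n1: "n = 1" using npos by linarith
        obtain c where c: "lnb (pth z) a c" "c \<noteq> a" "c \<in> set (pth' z)" using H1[OF z az n1 ne] by blast
        note C = IF[OF c(3)]
        have "Adj c a" using padj[OF z c(1)] adj_sym by blast
        then have "lnb (pth y) c a" using nbr_int[OF y] C by blast
        then show ?thesis using C by blast
      qed
      have "set (pth z) \<subseteq> intr (pth y)"
      proof
        fix x assume x: "x \<in> set (pth z)"
        show "x \<in> intr (pth y)"
        proof (cases "x = a")
          case True then show ?thesis using aI x by simp
        next
          case False then show ?thesis using IF M1z x by blast
        qed
      qed
      then show False using O3[OF y z Zne] by blast
    next
      case False
      then have sh: "shift y" using ay unfolding shift_def by simp
      note D = shiftD[OF sh]
      have pe: "pth' y = map (sig y) (pth y)" using ay False unfolding pth'_def by simp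
      have I': "intr (pth' y) = sig y ` intr (pth y)" using pe intr_map[OF sig_inj[OF sh]] by simp
      have SI: "sig y w \<in> intr (pth y) \<or> sig y w = u!(mr y)" if w: "w \<in> intr (pth y)" for w
      proof (cases "inrun y w")
        case False then show ?thesis using w sig_nrun by simp
      next
        case True
        then obtain i where i: "mr y \<le> i" "i < n" "w = u!i" unfolding inrun_def by blast
        have im: "i \<noteq> mr y" using R6[OF sh y] w i by auto
        have sw: "sig y w = u!(i-1)" using sig_run i by simp
        show ?thesis
        proof (cases "i - 1 = mr y")
          case True then show ?thesis using sw by simp
        next
          case False
          then have "mr y < i - 1" "Suc (i - 1) < n" using i im D by auto
          then show ?thesis using R5[OF sh y] sw by simp
        qed
      qed
      have NM: "u!(mr y - 1) \<notin> sig y ` intr (pth y)"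
      proof
        assume "u!(mr y - 1) \<in> sig y ` intr (pth y)"
        then obtain w where w: "w \<in> intr (pth y)" "sig y w = u!(mr y - 1)" by (metis imageE)
        have wy: "w \<in> set (pth y)" using w(1) intr_set[of "pth y"] by auto
        show False
        proof (cases "inrun y w")
          case False
          then have "w = u!(mr y - 1)" using w sig_nrun by simp
          then show False using wy D(3) by simp
        next
          case True
          then obtain i where i: "mr y \<le> i" "i < n" "w = u!i" unfolding inrun_def by blast
          then have "u!(i-1) = u!(mr y - 1)" using w sig_run by simp
          then have "i - 1 = mr y - 1" using uinj[of "i-1" "mr y - 1"] i D by auto
          then have "i = mr y" using i D by auto
          then show False using R6[OF sh y] w i by simp
        qed
      qed
      have um: "u!(mr y) \<notin> set (pth z)"
      proof
        assume "u!(mr y) \<in> set (pth z)"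
        then have "u!(mr y - 1) \<in> set (pth' z)" using G1[OF z D(1)] D by auto
        then show False using NM sub I' by auto
      qed
      have aI: "a \<in> intr (pth y)" if az: "a \<in> set (pth z)"
      proof -
        have "b \<in> sig y ` intr (pth y)" using M2[OF az D(5)] sub I' by auto
        then obtain w where w: "w \<in> intr (pth y)" "sig y w = b" by (metis imageE)
        have "w \<in> set (pth y)" using w(1) intr_set[of "pth y"] by auto
        then have "w = a" using R7[OF sh _ w(2)] by simp
        then show ?thesis using w by simp
      qed
      have "set (pth z) \<subseteq> intr (pth y)"
      proof
        fix x assume x: "x \<in> set (pth z)"
        show "x \<in> intr (pth y)"
        proof (cases "x = a")
          case True then show ?thesis using aI x by simp
        next
          case False
          then have "x \<in> sig y ` intr (pth y)" using M1z sub I' x by auto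
          then obtain w where w: "w \<in> intr (pth y)" "x = sig y w" by blast
          then have "x \<in> intr (pth y) \<or> x = u!(mr y)" using SI by simp
          then show ?thesis using um x by auto
        qed
      qed
      then show False using O3[OF y z Zne] by blast
    qed
  qed
qed

lemma pcc': "path_circular_collection V' Adj' (P - {eps}) pth'"
  unfolding path_circular_collection_def
proof (intro conjI ballI allI impI)
  show "finite (P - {eps})" using finP by simp
next
  fix x assume "x \<in> P - {eps}"
  then show "is_path V' Adj' (pth' x)" using new_path by simp
next
  fix x i assume x: "x \<in> P - {eps}" and i: "0 < i \<and> Suc i < length (pth' x)"
  have xP: "x \<in> P" using x by simp
  let ?p = "pth' x"
  have dp: "distinct ?p" using pth'_dist[OF xP] .
  have vI: "?p!i \<in> intr ?p" using intr_pos[OF dp] i by blast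
  have "{w\<in>V'. Adj' (?p!i) w} = {w. lnb ?p (?p!i) w}"
    using new_nbr[OF xP vI] new_chain[OF xP] Adj'_V by blast
  also have "\<dots> = {?p!(i-1), ?p!Suc i}" using intr_lnbs[OF dp] i by blast
  finally have "card {w\<in>V'. Adj' (?p!i) w} = 2" using intr_lnbs(2)[OF dp] i by simp
  then show "degree V' Adj' (?p!i) = 2" unfolding degree_def .
next
  fix x i y assume x: "x \<in> P - {eps}" and i: "0 < i \<and> Suc i < length (pth' x)" and y: "y \<in> P - {eps}"
    and iy: "pth' x ! i \<in> set (pth' y)"
  have xP: "x \<in> P" and yP: "y \<in> P" using x y by auto
  let ?p = "pth' x"
  have dp: "distinct ?p" using pth'_dist[OF xP] .
  have vI: "?p!i \<in> intr ?p" using intr_pos[OF dp] i by blast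
  have ne: "pth' y \<noteq> []" using iy by auto
  obtain w where w: "w \<in> set (pth' y)" "w \<notin> intr ?p" using new_refute[OF xP yP ne] by blast
  obtain s t where st: "lnb (pth' y) s t" "s \<in> intr ?p" "t \<notin> intr ?p"
    using crossing[OF iy vI w] by blast
  have "Adj' s t" using new_chain[OF yP st(1)] .
  then have "lnb ?p s t" using new_nbr[OF xP st(2)] by blast
  then have "t \<in> set ?p" using lnb_set by metis
  then have "t = hd ?p \<or> t = last ?p" using endpoint[OF dp _ st(3)] by blast
  moreover have "t \<in> set (pth' y)" using st(1) lnb_set by metis
  ultimately show "hd ?p \<in> set (pth' y) \<or> last ?p \<in> set (pth' y)" by auto
qed

end



context pcx begin

lemma contract_exists:
  "\<exists>(V2::nat set) Adj2 pth2. simple_graph V2 Adj2 \<and> path_circular_collection V2 Adj2 (P - {eps}) pth2 \<and>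
     (\<forall>S. S \<subseteq> P - {eps} \<longrightarrow>
       ((\<exists>\<phi>. inj_on \<phi> (insert eps S) \<and> (\<forall>x\<in>insert eps S. \<phi> x \<in> V \<and> \<phi> x \<in> set (pth x))) \<longleftrightarrow>
        (\<exists>\<psi>. inj_on \<psi> S \<and> (\<forall>x\<in>S. \<psi> x \<in> V2 \<and> \<psi> x \<in> set (pth2 x)))))"
proof (intro exI conjI allI impI)
  show "simple_graph V' Adj'" using sg' .
  show "path_circular_collection V' Adj' (P - {eps}) pth'" using pcc' .
  fix S assume S: "S \<subseteq> P - {eps}"
  show "(\<exists>\<phi>. inj_on \<phi> (insert eps S) \<and> (\<forall>x\<in>insert eps S. \<phi> x \<in> V \<and> \<phi> x \<in> set (pth x))) \<longleftrightarrow>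
        (\<exists>\<psi>. inj_on \<psi> S \<and> (\<forall>x\<in>S. \<psi> x \<in> V' \<and> \<psi> x \<in> set (pth' x)))"
    using key1[OF S] key2[OF S] by blast
qed

end

lemma gT: "ground (path_transversal V P pth) = P"
  unfolding ground_def path_transversal_def by simp
lemma iT: "indep (path_transversal V P pth) Y \<longleftrightarrow> Y \<subseteq> P \<and> (\<exists>f. inj_on f Y \<and> (\<forall>x\<in>Y. f x \<in> V \<and> f x \<in> set (pth x)))"
  unfolding indep_def path_transversal_def by simp

lemma pcc_del:
  assumes "path_circular_collection V Adj P pth"
  shows "path_circular_collection V Adj (P - {eps}) pth"
  using assms unfolding path_circular_collection_def by auto

theorem theorem1p3:
  fixes M :: "'a matroid" and e :: 'a
  assumes "path_circular M" and "e \<in> ground M"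
  shows "path_circular (mdelete M e) \<and> path_circular (mcontract M e)"
proof -
  obtain V :: "nat set" and Adj :: "nat \<Rightarrow> nat \<Rightarrow> bool" and P :: "nat set" and pth g where
    sg: "simple_graph V Adj" and pc: "path_circular_collection V Adj P pth"
    and bij: "bij_betw g (ground M) (ground (path_transversal V P pth))"
    and ind: "\<And>X. indep M X \<longleftrightarrow> X \<subseteq> ground M \<and> indep (path_transversal V P pth) (g ` X)"
    using assms(1) unfolding path_circular_def matroid_iso_def by blast
  have bijP: "bij_betw g (ground M) P" using bij gT by metis
  define eps where "eps = g e"
  have epsP: "eps \<in> P" using bijP assms(2) unfolding eps_def bij_betw_def by blast
  have bij': "bij_betw g (ground M - {e}) (P - {eps})"
  proof -
    have inj: "inj_on g (ground M)" using bijP bij_betw_def by blast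
    then have "inj_on g (ground M - {e})" by (rule inj_on_subset) auto
    moreover have "g ` (ground M - {e}) = g ` ground M - g ` {e}"
      by (rule inj_on_image_set_diff[OF inj]) (use assms(2) in auto)
    moreover have "g ` ground M = P" using bijP unfolding bij_betw_def by blast
    ultimately have "g ` (ground M - {e}) = P - {eps}" unfolding eps_def by simp
    with \<open>inj_on g (ground M - {e})\<close> show ?thesis unfolding bij_betw_def by blast
  qed
  have gX: "g ` X \<subseteq> P - {eps}" if "X \<subseteq> ground M - {e}" for X
    using bij' that unfolding bij_betw_def by blast
  have gM: "ground (mdelete M e) = ground M - {e}" "ground (mcontract M e) = ground M - {e}"
    unfolding mdelete_def mcontract_def ground_def by auto
  have iD: "indep (mdelete M e) X \<longleftrightarrow> X \<subseteq> ground M - {e} \<and> indep M X" for X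
    unfolding mdelete_def indep_def ground_def by simp
  have iC: "indep (mcontract M e) X \<longleftrightarrow> X \<subseteq> ground M - {e} \<and>
      (if indep M {e} then indep M (insert e X) else indep M X)" for X
    unfolding mcontract_def indep_def ground_def by simp
  have del: "path_circular (mdelete M e)"
    unfolding path_circular_def
  proof (intro exI conjI)
    show "simple_graph V Adj" using sg .
    show "path_circular_collection V Adj (P - {eps}) pth" using pcc_del[OF pc] .
    show "matroid_iso (mdelete M e) (path_transversal V (P - {eps}) pth)"
      unfolding matroid_iso_def
    proof (intro exI conjI allI)
      show "bij_betw g (ground (mdelete M e)) (ground (path_transversal V (P - {eps}) pth))"
        unfolding gM gT by (rule bij')
      fix X
      show "indep (mdelete M e) X \<longleftrightarrow> X \<subseteq> ground (mdelete M e) \<and> indep (path_transversal V (P - {eps}) pth) (g ` X)"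
        unfolding iD gM iT ind[of X] iT using gX by auto
    qed
  qed
  have con: "path_circular (mcontract M e)"
  proof (cases "indep M {e}")
    case False
    have "mcontract M e = mdelete M e"
      unfolding mcontract_def mdelete_def using False by simp
    then show ?thesis using del by simp
  next
    case True
    then have "indep (path_transversal V P pth) {eps}" using ind[of "{e}"] unfolding eps_def by simp
    then obtain f where "f eps \<in> V \<and> f eps \<in> set (pth eps)" unfolding iT by blast
    then have une: "pth eps \<noteq> []" by auto
    interpret pcx V Adj P pth eps using sg pc epsP une by unfold_locales
    obtain V2 :: "nat set" and Adj2 pth2 where H: "simple_graph V2 Adj2 \<and> path_circular_collection V2 Adj2 (P - {eps}) pth2 \<and>
     (\<forall>S. S \<subseteq> P - {eps} \<longrightarrow>
       ((\<exists>\<phi>. inj_on \<phi> (insert eps S) \<and> (\<forall>x\<in>insert eps S. \<phi> x \<in> V \<and> \<phi> x \<in> set (pth x))) \<longleftrightarrow>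
        (\<exists>\<psi>. inj_on \<psi> S \<and> (\<forall>x\<in>S. \<psi> x \<in> V2 \<and> \<psi> x \<in> set (pth2 x)))))"
      using contract_exists by (elim exE) assumption
    have sg2: "simple_graph V2 Adj2" and pc2: "path_circular_collection V2 Adj2 (P - {eps}) pth2"
      using H by auto
    have K: "\<And>S. S \<subseteq> P - {eps} \<Longrightarrow>
       ((\<exists>\<phi>. inj_on \<phi> (insert eps S) \<and> (\<forall>x\<in>insert eps S. \<phi> x \<in> V \<and> \<phi> x \<in> set (pth x))) \<longleftrightarrow>
        (\<exists>\<psi>. inj_on \<psi> S \<and> (\<forall>x\<in>S. \<psi> x \<in> V2 \<and> \<psi> x \<in> set (pth2 x))))"
      using H by (elim conjE allE impE)
    show ?thesis
      unfolding path_circular_def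
    proof (intro exI conjI)
      show "simple_graph V2 Adj2" using sg2 .
      show "path_circular_collection V2 Adj2 (P - {eps}) pth2" using pc2 .
      show "matroid_iso (mcontract M e) (path_transversal V2 (P - {eps}) pth2)"
        unfolding matroid_iso_def
      proof (intro exI conjI allI)
        show "bij_betw g (ground (mcontract M e)) (ground (path_transversal V2 (P - {eps}) pth2))"
          unfolding gM gT by (rule bij')
        fix X
        show "indep (mcontract M e) X \<longleftrightarrow> X \<subseteq> ground (mcontract M e) \<and> indep (path_transversal V2 (P - {eps}) pth2) (g ` X)"
        proof (cases "X \<subseteq> ground M - {e}")
          case False then show ?thesis unfolding iC gM by simp
        next
          case Xs: True
          have gx: "g ` X \<subseteq> P - {eps}" using gX[OF Xs] .
          have e1: "g ` insert e X = insert eps (g ` X)" unfolding eps_def by simp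
          have s1: "insert e X \<subseteq> ground M" "insert eps (g ` X) \<subseteq> P" using Xs assms(2) gx epsP by auto
          have "indep M (insert e X) \<longleftrightarrow>
             (\<exists>\<phi>. inj_on \<phi> (insert eps (g ` X)) \<and> (\<forall>x\<in>insert eps (g ` X). \<phi> x \<in> V \<and> \<phi> x \<in> set (pth x)))"
            using ind[of "insert e X"] s1 unfolding iT e1 by simp
          also have "\<dots> \<longleftrightarrow> indep (path_transversal V2 (P - {eps}) pth2) (g ` X)"
            unfolding iT using K[OF gx] gx by simp
          finally show ?thesis unfolding iC gM using True Xs by simp
        qed
      qed
    qed
  qed
  show ?thesis using del con by blast
qed



end
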